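(* Let $\Theta = \{l_1:\mathtt{qbit}, l_2:\mathtt{qbit}\}$ and $\theta = (l_1,l_2)$. Let $\mathscr{C}$ be a quantum circuit with holes such that $l:\mathtt{bit}, \Theta \rhd \mathscr{C} \rhd \Theta$ is derivable, and let $\mathscr{D}$ be the circuit with holes $\mathtt{if}\ l\ \mathtt{then}\ ([-];\{-\})\ \mathtt{else}\ (\{-\};[-])$. If $\mathscr{C} \approx \mathscr{D}$, then either the hole $[-]$ or the hole $\{-\}$ appears more than once in $\mathscr{C}$.
   Context: Circuits: fix an infinite set of labels; base types $\mathtt{bit},\mathtt{qbit}$; the operation set $\mathbb{Q}$ consists of $\mathtt{zero},\mathtt{one}:()\to(\mathtt{bit})$, $\mathtt{discard}:(\mathtt{bit})\to()$, $\mathtt{new}:(\mathtt{bit})\to(\mathtt{qbit})$, $\mathtt{meas}:(\mathtt{qbit})\to(\mathtt{bit})$, $H,S,T:(\mathtt{qbit})\to(\mathtt{qbit})$, $\mathrm{CNOT}:(\mathtt{qbit},\mathtt{qbit})\to(\mathtt{qbit},\mathtt{qbit})$. Circuits with holes are given by $\mathscr{C},\mathscr{D},\mathscr{E} ::= [-] \mid \{-\} \mid c^{\overline{l}}_{\overline{r}} \mid \mathscr{C};\mathscr{D} \mid \mathtt{if}\ l\ \mathtt{then}\ \mathscr{D}\ \mathtt{else}\ \mathscr{E}$ with $c\in\mathbb{Q}$ (gate $c$ applied to input wires $\overline{l}$ producing output wires $\overline{r}$). Environments are finite sets of (label : base type), each label at most once. Typing $\Gamma \rhd \mathscr{C} \rhd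 \Delta$ is derived by: $\Theta \rhd [-] \rhd \Theta$ and $\Theta \rhd \{-\} \rhd \Theta$ (with $\Theta$ as in the claim); for $c$ with input types $(B_1..B_n)$, output types $(B'_1..B'_m)$: $\Xi, l_1:B_1,\dots,l_n:B_n \rhd c^{(l_1..l_n)}_{(r_1..r_m)} \rhd \Xi, r_1:B'_1,\dots,r_m:B'_m$ for any environment $\Xi$; from $\Gamma\rhd\mathscr{C}\rhd\Psi$ and $\Psi\rhd\mathscr{D}\rhd\Delta$ infer $\Gamma\rhd\mathscr{C};\mathscr{D}\rhd\Delta$; from $\Gamma\rhd\mathscr{D}\rhd\Delta$ and $\Gamma\rhd\mathscr{E}\rhd\Delta$ infer $\Gamma,l:\mathtt{bit}\rhd \mathtt{if}\ l\ \mathtt{then}\ \mathscr{D}\ \mathtt{else}\ \mathscr{E}\rhd\Delta$. For circuits $C, D$ (possibly using additional gates), $\mathscr{C}(C,D)$ denotes the result of replacing $[-]$ by $C$ and $\{-\}$ by $D$. For any $4\times 4$ unitary matrix $U$, $U^\theta_\theta$ denotes the circuit applying $U$ as a gate to the wires $(l_1,l_2)$, with $\Theta \rhd U^\theta_\theta \rhd \Theta$. Semantics (category CPM): objects are tuples $(n_1,\dots,n_k)$ of positive integers with $V_{(n_1..n_k)}=\prod_i \mathbb{C}^{n_i\times n_i}$, morphisms are completely positive linear maps, tensor $(n_i)\otimes(m_j)=(n_im_j)_{i,j}$, unit $(1)$. $[\![\mathtt{bit}]\!]=(1,1)$, $[\![\mathtt{qbit}]\!]=(2)$, environments are interpreted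 as tensor products ordered by a fixed linear order on labels. A unitary gate $U$ is interpreted as $A\mapsto UAU^\dagger$; $[\![\mathtt{one}]\!](x)=(x,0)$, $[\![\mathtt{zero}]\!](x)=(0,x)$, $[\![\mathtt{new}]\!](x,0)=x|1\rangle\langle1|$, $[\![\mathtt{new}]\!](0,x)=x|0\rangle\langle0|$, $[\![\mathtt{meas}]\!]\begin{pmatrix}a&b\\c&d\end{pmatrix}=(a,d)$, $[\![\mathtt{discard}]\!](a,b)=a+b$. $[\![c^{\overline l}_{\overline r}]\!]$ is $\mathrm{id}_{[\![\Xi]\!]}\otimes[\![c]\!]$ up to symmetries, $[\![C;D]\!]=[\![D]\!]\circ[\![C]\!]$, and identifying $[\![\Gamma,l:\mathtt{bit}]\!]\cong[\![\Gamma]\!]\times[\![\Gamma]\!]$, $[\![\mathtt{if}\ l\ \mathtt{then}\ C\ \mathtt{else}\ D]\!](\vec A,\vec B)=[\![C]\!](\vec A)+[\![D]\!](\vec B)$. For circuits with holes $\Gamma\rhd\mathscr{C}\rhd\Delta$ and $\Gamma\rhd\mathscr{D}\rhd\Delta$, write $\mathscr{C}\approx\mathscr{D}$ if for all $4\times4$ unitary matrices $U,V$, $[\![\mathscr{C}(U^\theta_\theta,V^\theta_\theta)]\!] = [\![\mathscr{D}(U^\theta_\theta,V^\theta_\theta)]\!]$. *)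

theory Defs
  imports "Jordan_Normal_Form.Schur_Decomposition"
begin

datatype btype = Bit | Qbit

datatype qgate = Zero | One | Discard | New | Meas | Hgate | Sgate | Tgate | CNOT

fun gate_in :: "qgate \<Rightarrow> btype list" where
  "gate_in Zero = []"
| "gate_in One = []"
| "gate_in Discard = [Bit]"
| "gate_in New = [Bit]"
| "gate_in Meas = [Qbit]"
| "gate_in Hgate = [Qbit]"
| "gate_in Sgate = [Qbit]"
| "gate_in Tgate = [Qbit]"
| "gate_in CNOT = [Qbit, Qbit]"

fun gate_out :: "qgate \<Rightarrow> btype list" where
  "gate_out Zero = [Bit]"
| "gate_out One = [Bit]"
| "gate_out Discard = []"
| "gate_out New = [Qbit]"
| "gate_out Meas = [Bit]"
| "gate_out Hgate = [Qbit]"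
| "gate_out Sgate = [Qbit]"
| "gate_out Tgate = [Qbit]"
| "gate_out CNOT = [Qbit, Qbit]"

text \<open>Circuits with holes: Hole1 is [-], Hole2 is {-}; Gate g ls rs is g applied to
  input wires ls producing output wires rs.\<close>
datatype 'l circ =
    Hole1
  | Hole2
  | Gate qgate "'l list" "'l list"
  | Seq "'l circ" "'l circ"
  | If 'l "'l circ" "'l circ"

fun count_hole1 :: "'l circ \<Rightarrow> nat" where
  "count_hole1 Hole1 = 1"
| "count_hole1 Hole2 = 0"
| "count_hole1 (Gate g ls rs) = 0"
| "count_hole1 (Seq C D) = count_hole1 C + count_hole1 D"
| "count_hole1 (If l C D) = count_hole1 C + count_hole1 D"

fun count_hole2 :: "'l circ \<Rightarrow> nat" where
  "count_hole2 Hole1 = 0"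
| "count_hole2 Hole2 = 1"
| "count_hole2 (Gate g ls rs) = 0"
| "count_hole2 (Seq C D) = count_hole2 C + count_hole2 D"
| "count_hole2 (If l C D) = count_hole2 C + count_hole2 D"

type_synonym 'l env = "'l \<rightharpoonup> btype"

text \<open>typing Theta Gamma C Delta  means  Gamma |> C |> Delta, where Theta is the
  environment of the holes.\<close>
inductive typing :: "'l env \<Rightarrow> 'l env \<Rightarrow> 'l circ \<Rightarrow> 'l env \<Rightarrow> bool" for Th :: "'l env" where
  hole1: "finite (dom Th) \<Longrightarrow> typing Th Th Hole1 Th"
| hole2: "finite (dom Th) \<Longrightarrow> typing Th Th Hole2 Th"
| gate: "\<lbrakk> finite (dom Xi); length ls = length (gate_in g); length rs = length (gate_out g);
           distinct ls; distinct rs; set ls \<inter> dom Xi = {}; set rs \<inter> dom Xi = {} \<rbrakk>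
         \<Longrightarrow> typing Th (Xi ++ map_of (zip ls (gate_in g))) (Gate g ls rs)
                       (Xi ++ map_of (zip rs (gate_out g)))"
| seq: "\<lbrakk> typing Th Ga C Ps; typing Th Ps D De \<rbrakk> \<Longrightarrow> typing Th Ga (Seq C D) De"
| ifte: "\<lbrakk> typing Th Ga D De; typing Th Ga E De; l \<notin> dom Ga \<rbrakk>
         \<Longrightarrow> typing Th (Ga(l \<mapsto> Bit)) (If l D E) De"

text \<open>An element of V_[[Gamma]] is represented label-wise: st c i j is the (i,j) entry of the
  block indexed by the classical valuation c; c assigns values to the bit labels
  (True = first component of (1,1)), i and j assign values to the qubit labels
  (True = basis state |1>). Only canonical arguments (False outside the relevant labels)
  are meaningful.\<close>
type_synonym 'l state = "('l \<Rightarrow> bool) \<Rightarrow> ('l \<Rightarrow> bool) \<Rightarrow> ('l \<Rightarrow> bool) \<Rightarrow> complex"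

definition labels_of :: "'l env \<Rightarrow> btype \<Rightarrow> 'l set" where
  "labels_of G B = {x. G x = Some B}"

definition canon :: "'l set \<Rightarrow> ('l \<Rightarrow> bool) \<Rightarrow> bool" where
  "canon A f \<longleftrightarrow> (\<forall>x. x \<notin> A \<longrightarrow> \<not> f x)"

definition canon_idx :: "'l env \<Rightarrow> ('l \<Rightarrow> bool) \<Rightarrow> ('l \<Rightarrow> bool) \<Rightarrow> ('l \<Rightarrow> bool) \<Rightarrow> bool" where
  "canon_idx G c i j \<longleftrightarrow> canon (labels_of G Bit) c \<and> canon (labels_of G Qbit) i \<and> canon (labels_of G Qbit) j"

definition states :: "'l env \<Rightarrow> 'l state set" where
  "states G = {st. \<forall>c i j. \<not> canon_idx G c i j \<longrightarrow> st c i j = 0}"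

fun setv :: "('l \<Rightarrow> bool) \<Rightarrow> 'l list \<Rightarrow> bool list \<Rightarrow> ('l \<Rightarrow> bool)" where
  "setv f (x # xs) (b # bs) = (setv f xs bs)(x := b)"
| "setv f _ _ = f"

definition clr :: "('l \<Rightarrow> bool) \<Rightarrow> 'l list \<Rightarrow> ('l \<Rightarrow> bool)" where
  "clr f xs = setv f xs (replicate (length xs) False)"

text \<open>Big-endian index of a list of bits (first wire = most significant).\<close>
fun bidx :: "bool list \<Rightarrow> nat" where
  "bidx [] = 0"
| "bidx (b # bs) = (if b then 2 ^ length bs else 0) + bidx bs"

text \<open>Semantics of a unitary M (2^n x 2^n matrix) applied to input wires ls with output
  wires rs: A |-> M A M^dagger, tensored with the identity.\<close>
definition usem :: "complex mat \<Rightarrow> 'l list \<Rightarrow> 'l list \<Rightarrow> 'l state \<Rightarrow> 'l state" where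
  "usem M ls rs st = (\<lambda>c i j.
     \<Sum>a\<in>{xs::bool list. length xs = length ls}. \<Sum>b\<in>{xs::bool list. length xs = length ls}.
       M $$ (bidx (map i rs), bidx a) * st c (setv (clr i rs) ls a) (setv (clr j rs) ls b)
       * cnj (M $$ (bidx (map j rs), bidx b)))"

definition Hmat :: "complex mat" where
  "Hmat = mat 2 2 (\<lambda>(r,s). if r = 1 \<and> s = 1 then - 1 / complex_of_real (sqrt 2)
                             else 1 / complex_of_real (sqrt 2))"

definition Smat :: "complex mat" where
  "Smat = mat 2 2 (\<lambda>(r,s). if r = 0 \<and> s = 0 then 1 else if r = 1 \<and> s = 1 then \<i> else 0)"

definition Tmat :: "complex mat" where
  "Tmat = mat 2 2 (\<lambda>(r,s). if r = 0 \<and> s = 0 then 1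
                           else if r = 1 \<and> s = 1 then exp (\<i> * complex_of_real (pi / 4)) else 0)"

text \<open>CNOT with the first wire as control and the second as target.\<close>
definition CNOTmat :: "complex mat" where
  "CNOTmat = mat 4 4 (\<lambda>(r,s). if (r < 2 \<and> s = r) \<or> (r = 2 \<and> s = 3) \<or> (r = 3 \<and> s = 2) then 1 else 0)"

fun gsem :: "qgate \<Rightarrow> 'l list \<Rightarrow> 'l list \<Rightarrow> 'l state \<Rightarrow> 'l state" where
  "gsem One ls rs st = (\<lambda>c i j. if c (hd rs) then st (c(hd rs := False)) i j else 0)"
| "gsem Zero ls rs st = (\<lambda>c i j. if c (hd rs) then 0 else st (c(hd rs := False)) i j)"
| "gsem Discard ls rs st = (\<lambda>c i j. st (c(hd ls := True)) i j + st (c(hd ls := False)) i j)"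
| "gsem New ls rs st = (\<lambda>c i j. if i (hd rs) = j (hd rs)
      then st (c(hd ls := i (hd rs))) (i(hd rs := False)) (j(hd rs := False)) else 0)"
| "gsem Meas ls rs st = (\<lambda>c i j.
      st (c(hd rs := False)) (i(hd ls := \<not> c (hd rs))) (j(hd ls := \<not> c (hd rs))))"
| "gsem Hgate ls rs st = usem Hmat ls rs st"
| "gsem Sgate ls rs st = usem Smat ls rs st"
| "gsem Tgate ls rs st = usem Tmat ls rs st"
| "gsem CNOT ls rs st = usem CNOTmat ls rs st"

text \<open>Semantics of C(X, Y), where h1 and h2 are the semantics of the circuits X, Y
  plugged into the holes [-] and {-}.\<close>
fun csem :: "('l state \<Rightarrow> 'l state) \<Rightarrow> ('l state \<Rightarrow> 'l state) \<Rightarrow> 'l circ \<Rightarrow> 'l state \<Rightarrow> 'l state" where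
  "csem h1 h2 Hole1 st = h1 st"
| "csem h1 h2 Hole2 st = h2 st"
| "csem h1 h2 (Gate g ls rs) st = gsem g ls rs st"
| "csem h1 h2 (Seq C D) st = csem h1 h2 D (csem h1 h2 C st)"
| "csem h1 h2 (If l C D) st =
     (\<lambda>c i j. csem h1 h2 C (\<lambda>c' i' j'. st (c'(l := True)) i' j') c i j
            + csem h1 h2 D (\<lambda>c' i' j'. st (c'(l := False)) i' j') c i j)"

definition unitary4 :: "complex mat \<Rightarrow> bool" where
  "unitary4 U \<longleftrightarrow> U \<in> carrier_mat 4 4 \<and> U * mat_adjoint U = 1\<^sub>m 4"

definition fill_sem :: "'l \<Rightarrow> 'l \<Rightarrow> complex mat \<Rightarrow> complex mat \<Rightarrow> 'l circ \<Rightarrow> 'l state \<Rightarrow> 'l state" where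
  "fill_sem l1 l2 U V C = csem (usem U [l1, l2] [l1, l2]) (usem V [l1, l2] [l1, l2]) C"

definition approx :: "'l \<Rightarrow> 'l \<Rightarrow> 'l env \<Rightarrow> 'l env \<Rightarrow> 'l circ \<Rightarrow> 'l circ \<Rightarrow> bool" where
  "approx l1 l2 Ga De C D \<longleftrightarrow>
     typing [l1 \<mapsto> Qbit, l2 \<mapsto> Qbit] Ga C De \<and> typing [l1 \<mapsto> Qbit, l2 \<mapsto> Qbit] Ga D De \<and>
     (\<forall>U V. unitary4 U \<longrightarrow> unitary4 V \<longrightarrow>
        (\<forall>st\<in>states Ga. \<forall>c i j. canon_idx De c i j \<longrightarrow>
            fill_sem l1 l2 U V C st c i j = fill_sem l1 l2 U V D st c i j))"

end

theory Submission
  imports Defs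
begin


definition addst :: "'l state \<Rightarrow> 'l state \<Rightarrow> 'l state" where
  "addst x y = (\<lambda>c i j. x c i j + y c i j)"
definition subs :: "'l state \<Rightarrow> 'l state \<Rightarrow> 'l state" where
  "subs x y = (\<lambda>c i j. x c i j - y c i j)"
definition smul :: "complex \<Rightarrow> 'l state \<Rightarrow> 'l state" where
  "smul a x = (\<lambda>c i j. a * x c i j)"
definition zst :: "'l state" where
  "zst = (\<lambda>c i j. 0)"

definition lin :: "('l state \<Rightarrow> 'l state) \<Rightarrow> bool" where
  "lin f \<longleftrightarrow> (\<forall>x y. f (addst x y) = addst (f x) (f y)) \<and> (\<forall>a x. f (smul a x) = smul a (f x))"

lemma linI:
  assumes "\<And>x y. f (addst x y) = addst (f x) (f y)" "\<And>a x. f (smul a x) = smul a (f x)"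
  shows "lin f" using assms unfolding lin_def by blast

lemma lin_add: "lin f \<Longrightarrow> f (addst x y) = addst (f x) (f y)" unfolding lin_def by blast
lemma lin_smul: "lin f \<Longrightarrow> f (smul a x) = smul a (f x)" unfolding lin_def by blast
lemma lin_zero: "lin f \<Longrightarrow> f zst = zst"
proof -
  assume f: "lin f"
  have "zst = smul 0 (zst :: 'l state)" by (simp add: smul_def zst_def)
  then have "f zst = f (smul 0 zst)" by (rule arg_cong)
  also have "\<dots> = smul 0 (f zst)" using lin_smul[OF f] by simp
  also have "\<dots> = zst" by (simp add: smul_def zst_def)
  finally show ?thesis .
qed
lemma subs_eq: "subs x y = addst x (smul (-1) y)"
  by (simp add: subs_def addst_def smul_def)
lemma lin_sub: "lin f \<Longrightarrow> f (subs x y) = subs (f x) (f y)"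
  by (simp add: subs_eq lin_add lin_smul)

lemma lin_id: "lin (\<lambda>x. x)" by (simp add: lin_def)
lemma lin_comp: "lin f \<Longrightarrow> lin g \<Longrightarrow> lin (\<lambda>x. f (g x))" by (simp add: lin_def)

lemma lin_usem: "lin (usem M ls rs)"
  unfolding lin_def usem_def addst_def smul_def
  by (auto simp: fun_eq_iff algebra_simps sum.distrib sum_distrib_left)

lemma lin_gsem: "lin (gsem g ls rs)"
  by (cases g) (auto simp: lin_def addst_def smul_def fun_eq_iff lin_usem[unfolded lin_def addst_def smul_def] algebra_simps)

lemma csem_Gate: "csem h1 h2 (Gate g ls rs) = gsem g ls rs" by (rule ext) simp
lemma csem_Hole1: "csem h1 h2 Hole1 = h1" by (rule ext) simp
lemma csem_Hole2: "csem h1 h2 Hole2 = h2" by (rule ext) simp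
lemma csem_Seq: "csem h1 h2 (Seq C D) = (\<lambda>st. csem h1 h2 D (csem h1 h2 C st))" by (rule ext) simp

lemma lin_csem: "lin h1 \<Longrightarrow> lin h2 \<Longrightarrow> lin (csem h1 h2 C)"
proof (induction C)
  case (If l C D)
  then show ?case
    unfolding lin_def
    by (auto simp: fun_eq_iff addst_def smul_def algebra_simps)
next
  case (Seq C D) then show ?case by (simp add: csem_Seq lin_comp)
qed (simp_all add: lin_gsem csem_Gate csem_Hole1 csem_Hole2)

lemma indep1: "count_hole1 C = 0 \<Longrightarrow> csem h1 h2 C = csem h1' h2 C"
proof (induction C)
  case (Seq C D) then show ?case by (simp add: csem_Seq)
next
  case (If l C D) then show ?case by (simp add: fun_eq_iff)
qed (simp_all add: fun_eq_iff)
lemma indep2: "count_hole2 C = 0 \<Longrightarrow> csem h1 h2 C = csem h1 h2' C"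
proof (induction C)
  case (Seq C D) then show ?case by (simp add: csem_Seq)
next
  case (If l C D) then show ?case by (simp add: fun_eq_iff)
qed (simp_all add: fun_eq_iff)


definition eqon :: "'l env \<Rightarrow> 'l state \<Rightarrow> 'l state \<Rightarrow> bool" where
  "eqon G x y \<longleftrightarrow> (\<forall>c i j. canon_idx G c i j \<longrightarrow> x c i j = y c i j)"
definition resp :: "'l env \<Rightarrow> 'l env \<Rightarrow> ('l state \<Rightarrow> 'l state) \<Rightarrow> bool" where
  "resp G D f \<longleftrightarrow> (\<forall>x y. eqon G x y \<longrightarrow> eqon D (f x) (f y))"

lemma setv_notin: "x \<notin> set xs \<Longrightarrow> setv f xs bs x = f x"
  by (induction f xs bs rule: setv.induct) auto

lemma canon_setv: "canon A f \<Longrightarrow> set xs \<subseteq> A \<Longrightarrow> canon A (setv f xs bs)"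
  by (induction f xs bs rule: setv.induct) (auto simp: canon_def)

lemma clr_Cons: "clr f (x # xs) = (clr f xs)(x := False)"
  by (simp add: clr_def)

lemma clr_apply: "clr f xs z = (z \<notin> set xs \<and> f z)"
proof (induction xs)
  case Nil show ?case by (simp add: clr_def)
next
  case (Cons a xs) then show ?case by (simp add: clr_Cons)
qed

lemma eqonD: "eqon G x y \<Longrightarrow> canon_idx G c i j \<Longrightarrow> x c i j = y c i j"
  unfolding eqon_def by blast

lemma usem_resp:
  fixes In Out :: "'l env" and ls rs :: "'l list"
  assumes "labels_of Out Bit \<subseteq> labels_of In Bit" "labels_of Out Qbit - set rs \<subseteq> labels_of In Qbit"
    "set ls \<subseteq> labels_of In Qbit"
  shows "resp In Out (usem M ls rs)"
  unfolding resp_def eqon_def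
proof (intro allI impI)
  fix x y :: "'l state" and c i j :: "'l \<Rightarrow> bool"
  assume eq: "\<forall>c i j. canon_idx In c i j \<longrightarrow> x c i j = y c i j" and cj: "canon_idx Out c i j"
  have cq: "canon (labels_of In Qbit) (clr f rs)" if "canon (labels_of Out Qbit) f" for f
    using that assms(2) unfolding canon_def by (auto simp: clr_apply)
  have cb: "canon (labels_of In Bit) c" using cj assms(1) unfolding canon_idx_def canon_def by auto
  have "canon_idx In c (setv (clr i rs) ls a) (setv (clr j rs) ls b)" for a b
    unfolding canon_idx_def using cb canon_setv[OF cq assms(3)] cj unfolding canon_idx_def by auto
  then show "usem M ls rs x c i j = usem M ls rs y c i j"
    unfolding usem_def using eq by (intro sum.cong refl) auto
qed

lemma labels_upd: "labels_of (Xi(x \<mapsto> B')) B = (if B' = B then insert x (labels_of Xi B) else labels_of Xi B - {x})"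
  by (auto simp: labels_of_def)

lemma labels_dom: "labels_of Xi B \<subseteq> dom Xi" by (auto simp: labels_of_def)

lemma gsem_usem: "gsem Hgate ls rs = usem Hmat ls rs" "gsem Sgate ls rs = usem Smat ls rs"
  "gsem Tgate ls rs = usem Tmat ls rs" "gsem CNOT ls rs = usem CNOTmat ls rs"
  by (rule ext, simp)+

lemma gate_resp:
  fixes Xi :: "'l env" and ls rs :: "'l list"
  assumes "length ls = length (gate_in g)" "length rs = length (gate_out g)"
    "set ls \<inter> dom Xi = {}" "set rs \<inter> dom Xi = {}"
  shows "resp (Xi ++ map_of (zip ls (gate_in g))) (Xi ++ map_of (zip rs (gate_out g))) (gsem g ls rs)"
proof (cases g)
  case Zero
  then obtain r where rs: "rs = [r]" using assms by (cases rs) auto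
  show ?thesis unfolding resp_def eqon_def
  proof (intro allI impI)
    fix st st' :: "'l state" and c i j :: "'l \<Rightarrow> bool"
    assume eq: "\<forall>c i j. canon_idx (Xi ++ map_of (zip ls (gate_in g))) c i j \<longrightarrow> st c i j = st' c i j"
      and cj: "canon_idx (Xi ++ map_of (zip rs (gate_out g))) c i j"
    have "canon_idx Xi (c(r := False)) i j" using cj assms rs Zero by (auto simp: canon_idx_def labels_of_def canon_def)
    then show "gsem g ls rs st c i j = gsem g ls rs st' c i j" using eq Zero rs by auto
  qed
next
  case One
  then obtain r where rs: "rs = [r]" using assms by (cases rs) auto
  show ?thesis unfolding resp_def eqon_def
  proof (intro allI impI)
    fix st st' :: "'l state" and c i j :: "'l \<Rightarrow> bool"
    assume eq: "\<forall>c i j. canon_idx (Xi ++ map_of (zip ls (gate_in g))) c i j \<longrightarrow> st c i j = st' c i j"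
      and cj: "canon_idx (Xi ++ map_of (zip rs (gate_out g))) c i j"
    have "canon_idx Xi (c(r := False)) i j" using cj assms rs One by (auto simp: canon_idx_def labels_of_def canon_def)
    then show "gsem g ls rs st c i j = gsem g ls rs st' c i j" using eq One rs by auto
  qed
next
  case Discard
  then obtain r where rs: "ls = [r]" using assms by (cases ls) auto
  show ?thesis unfolding resp_def eqon_def
  proof (intro allI impI)
    fix st st' :: "'l state" and c i j :: "'l \<Rightarrow> bool"
    assume eq: "\<forall>c i j. canon_idx (Xi ++ map_of (zip ls (gate_in g))) c i j \<longrightarrow> st c i j = st' c i j"
      and cj: "canon_idx (Xi ++ map_of (zip rs (gate_out g))) c i j"
    have "canon_idx (Xi(r \<mapsto> Bit)) (c(r := b)) i j" for b using cj assms rs Discard by (auto simp: canon_idx_def labels_of_def canon_def)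
    then show "gsem g ls rs st c i j = gsem g ls rs st' c i j" using eq Discard rs by auto
  qed
next
  case New
  then obtain r x where rs: "ls = [x]" "rs = [r]" using assms by (cases ls; cases rs) auto
  show ?thesis unfolding resp_def eqon_def
  proof (intro allI impI)
    fix st st' :: "'l state" and c i j :: "'l \<Rightarrow> bool"
    assume eq: "\<forall>c i j. canon_idx (Xi ++ map_of (zip ls (gate_in g))) c i j \<longrightarrow> st c i j = st' c i j"
      and cj: "canon_idx (Xi ++ map_of (zip rs (gate_out g))) c i j"
    have "canon_idx (Xi(x \<mapsto> Bit)) (c(x := b)) (i(r := False)) (j(r := False))" for b using cj assms rs New by (auto simp: canon_idx_def labels_of_def canon_def)
    then show "gsem g ls rs st c i j = gsem g ls rs st' c i j" using eq New rs by auto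
  qed
next
  case Meas
  then obtain r x where rs: "ls = [x]" "rs = [r]" using assms by (cases ls; cases rs) auto
  show ?thesis unfolding resp_def eqon_def
  proof (intro allI impI)
    fix st st' :: "'l state" and c i j :: "'l \<Rightarrow> bool"
    assume eq: "\<forall>c i j. canon_idx (Xi ++ map_of (zip ls (gate_in g))) c i j \<longrightarrow> st c i j = st' c i j"
      and cj: "canon_idx (Xi ++ map_of (zip rs (gate_out g))) c i j"
    have "canon_idx (Xi(x \<mapsto> Qbit)) (c(r := False)) (i(x := b)) (j(x := b))" for b using cj assms rs Meas by (auto simp: canon_idx_def labels_of_def canon_def)
    then show "gsem g ls rs st c i j = gsem g ls rs st' c i j" using eq Meas rs by auto
  qed
next
  case Hgate
  then obtain r x where rs: "ls = [x]" "rs = [r]" using assms by (cases ls; cases rs) auto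
  from assms Hgate rs show ?thesis
    by (auto simp: gsem_usem intro!: usem_resp simp: labels_upd dest: subsetD[OF labels_dom])
next
  case Sgate
  then obtain r x where rs: "ls = [x]" "rs = [r]" using assms by (cases ls; cases rs) auto
  from assms Sgate rs show ?thesis
    by (auto simp: gsem_usem intro!: usem_resp simp: labels_upd dest: subsetD[OF labels_dom])
next
  case Tgate
  then obtain r x where rs: "ls = [x]" "rs = [r]" using assms by (cases ls; cases rs) auto
  from assms Tgate rs show ?thesis
    by (auto simp: gsem_usem intro!: usem_resp simp: labels_upd dest: subsetD[OF labels_dom])
next
  case CNOT
  then obtain r1 r2 x1 x2 where rs: "ls = [x1, x2]" "rs = [r1, r2]" using assms
    by (cases ls; cases rs; auto simp: length_Suc_conv)
  from assms CNOT rs show ?thesis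
    by (auto simp: gsem_usem intro!: usem_resp simp: labels_upd dest: subsetD[OF labels_dom])
qed


lemma resp_comp: "resp A B f \<Longrightarrow> resp B C g \<Longrightarrow> resp A C (\<lambda>x. g (f x))"
  unfolding resp_def by blast

lemma resp_id: "resp A A (\<lambda>x. x)" unfolding resp_def by blast

lemma resp_csem:
  fixes Th Ga De :: "'l env"
  assumes "typing Th Ga C De" "resp Th Th h1" "resp Th Th h2"
  shows "resp Ga De (csem h1 h2 C)"
  using assms(1)
proof (induction rule: typing.induct)
  case (hole1) then show ?case using assms by (simp add: csem_Hole1)
next
  case (hole2) then show ?case using assms by (simp add: csem_Hole2)
next
  case (gate Xi ls g rs) then show ?case by (simp add: csem_Gate gate_resp)
next
  case (seq Ga C Ps D De) then show ?case by (simp add: csem_Seq resp_comp)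
next
  case (ifte Ga D De E l)
  show ?case unfolding resp_def
  proof (intro allI impI)
    fix x y :: "'l state"
    assume eq: "eqon (Ga(l \<mapsto> Bit)) x y"
    have ci: "canon_idx (Ga(l \<mapsto> Bit)) (c(l := b)) i j" if "canon_idx Ga c i j" for c i j b
      using that ifte.hyps(3) by (auto simp: canon_idx_def labels_of_def canon_def)
    have e1: "eqon Ga (\<lambda>c' i' j'. x (c'(l := b)) i' j') (\<lambda>c' i' j'. y (c'(l := b)) i' j')" for b
      unfolding eqon_def using eqonD[OF eq ci] by blast
    have d: "eqon De (csem h1 h2 D (\<lambda>c' i' j'. x (c'(l := b)) i' j')) (csem h1 h2 D (\<lambda>c' i' j'. y (c'(l := b)) i' j'))" for b
      using ifte.IH(1) e1 unfolding resp_def by blast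
    have e: "eqon De (csem h1 h2 E (\<lambda>c' i' j'. x (c'(l := b)) i' j')) (csem h1 h2 E (\<lambda>c' i' j'. y (c'(l := b)) i' j'))" for b
      using ifte.IH(2) e1 unfolding resp_def by blast
    show "eqon De (csem h1 h2 (If l D E) x) (csem h1 h2 (If l D E) y)"
      using d e unfolding eqon_def by simp
  qed
qed


definition good :: "'l env \<Rightarrow> ('l state \<Rightarrow> 'l state) \<Rightarrow> bool" where
  "good Th h \<longleftrightarrow> lin h \<and> resp Th Th h"

lemma good_id: "good Th (\<lambda>x. x)" by (simp add: good_def lin_id resp_id)

definition csem0 :: "'l circ \<Rightarrow> 'l state \<Rightarrow> 'l state" where
  "csem0 C = csem (\<lambda>x. x) (\<lambda>x. x) C"

lemma csem0_eq: "count_hole1 C = 0 \<Longrightarrow> count_hole2 C = 0 \<Longrightarrow> csem h1 h2 C = csem0 C"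
  unfolding csem0_def by (metis indep1 indep2)

lemma lin_csem0: "lin (csem0 C)" unfolding csem0_def by (rule lin_csem[OF lin_id lin_id])

lemma resp_csem0: "typing Th Ga C De \<Longrightarrow> resp Ga De (csem0 C)"
  unfolding csem0_def by (rule resp_csem[OF _ resp_id resp_id])

lemma good_resp_csem: "typing Th Ga C De \<Longrightarrow> good Th h1 \<Longrightarrow> good Th h2 \<Longrightarrow> resp Ga De (csem h1 h2 C)"
  unfolding good_def by (rule resp_csem) auto

lemma lin_const0: "lin (\<lambda>x. zst)" by (simp add: lin_def addst_def smul_def zst_def)
lemma resp_const0: "resp A B (\<lambda>x. zst)" by (simp add: resp_def eqon_def)

lemma eqon_trans: "eqon G x y \<Longrightarrow> eqon G y z \<Longrightarrow> eqon G x z" unfolding eqon_def by auto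
lemma eqon_refl: "eqon G x x" unfolding eqon_def by auto

definition MA2 :: "'l env \<Rightarrow> 'l env \<Rightarrow> 'l circ \<Rightarrow> ('l state \<Rightarrow> 'l state) \<Rightarrow> bool" where
  "MA2 Th De C E \<longleftrightarrow> lin E \<and> resp Th De E \<and> (\<forall>h1 h2 h2' st. good Th h1 \<longrightarrow> good Th h2 \<longrightarrow> good Th h2' \<longrightarrow>
     (\<exists>y. eqon De (subs (csem h1 h2 C st) (csem h1 h2' C st)) (E (subs (h2 y) (h2' y)))))"

definition MA1 :: "'l env \<Rightarrow> 'l env \<Rightarrow> 'l circ \<Rightarrow> ('l state \<Rightarrow> 'l state) \<Rightarrow> bool" where
  "MA1 Th De C E \<longleftrightarrow> lin E \<and> resp Th De E \<and> (\<forall>h1 h1' h2 st. good Th h1 \<longrightarrow> good Th h1' \<longrightarrow> good Th h2 \<longrightarrow>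
     (\<exists>y. eqon De (subs (csem h1 h2 C st) (csem h1' h2 C st)) (E (subs (h1 y) (h1' y)))))"

lemma subs_self: "subs x x = zst" by (simp add: subs_def zst_def)

lemma claimA2:
  fixes Th Ga De :: "'l env"
  shows "typing Th Ga C De \<Longrightarrow> count_hole1 C = 0 \<Longrightarrow> count_hole2 C \<le> 1 \<Longrightarrow> \<exists>E. MA2 Th De C E"
proof (induction rule: typing.induct)
  case (hole1) then show ?case by simp
next
  case (hole2)
  show ?case
    by (rule exI[of _ "\<lambda>x. x"]) (auto simp: MA2_def lin_id resp_id csem_Hole2 intro!: exI eqon_refl)
next
  case (gate Xi ls g rs)
  show ?case
    by (rule exI[of _ "\<lambda>x. zst"]) (auto simp: MA2_def lin_const0 resp_const0 subs_self eqon_refl)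
next
  case (seq Ga C Ps D De)
  show ?case
  proof (cases "count_hole2 D = 0")
    case True
    then obtain E where E: "MA2 Th Ps C E" using seq by auto
    show ?thesis
    proof (rule exI[of _ "\<lambda>x. csem0 D (E x)"], unfold MA2_def, intro conjI allI impI)
      show "lin (\<lambda>x. csem0 D (E x))" using E lin_csem0 lin_comp unfolding MA2_def by blast
      show "resp Th De (\<lambda>x. csem0 D (E x))" using E resp_csem0[OF seq.hyps(2)] resp_comp unfolding MA2_def by blast
      fix h1 h2 h2' st assume g: "good Th h1" "good Th h2" "good Th h2'"
      obtain y where y: "eqon Ps (subs (csem h1 h2 C st) (csem h1 h2' C st)) (E (subs (h2 y) (h2' y)))"
        using E g unfolding MA2_def by blast
      have D0: "csem h h' D = csem0 D" for h h' using True seq.prems by (simp add: csem0_eq)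
      have "subs (csem h1 h2 (Seq C D) st) (csem h1 h2' (Seq C D) st)
          = csem0 D (subs (csem h1 h2 C st) (csem h1 h2' C st))"
        by (simp add: D0 lin_sub[OF lin_csem0])
      then show "\<exists>y. eqon De (subs (csem h1 h2 (Seq C D) st) (csem h1 h2' (Seq C D) st)) (csem0 D (E (subs (h2 y) (h2' y))))"
        using y resp_csem0[OF seq.hyps(2)] unfolding resp_def by metis
    qed
  next
    case False
    then have C0: "count_hole2 C = 0" using seq.prems by simp
    then obtain E where E: "MA2 Th De D E" using seq by auto
    show ?thesis
    proof (rule exI[of _ E], unfold MA2_def, intro conjI allI impI)
      show "lin E" "resp Th De E" using E unfolding MA2_def by auto
      fix h1 h2 h2' st assume g: "good Th h1" "good Th h2" "good Th h2'"
      have "csem h1 h2' C = csem h1 h2 C" using C0 indep2 by metis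
      then show "\<exists>y. eqon De (subs (csem h1 h2 (Seq C D) st) (csem h1 h2' (Seq C D) st)) (E (subs (h2 y) (h2' y)))"
        using E g unfolding MA2_def by simp
    qed
  qed
next
  case (ifte Ga D De E l)
  show ?case
  proof (cases "count_hole2 E = 0")
    case True
    then obtain F where F: "MA2 Th De D F" using ifte by auto
    show ?thesis
    proof (rule exI[of _ F], unfold MA2_def, intro conjI allI impI)
      show "lin F" "resp Th De F" using F unfolding MA2_def by auto
      fix h1 h2 h2' st assume g: "good Th h1" "good Th h2" "good Th h2'"
      have E0: "csem h1 h2' E = csem h1 h2 E" using True indep2 by metis
      obtain y where y: "eqon De (subs (csem h1 h2 D (\<lambda>c' i' j'. st (c'(l := True)) i' j')) (csem h1 h2' D (\<lambda>c' i' j'. st (c'(l := True)) i' j'))) (F (subs (h2 y) (h2' y)))"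
        using F g unfolding MA2_def by blast
      have "subs (csem h1 h2 (If l D E) st) (csem h1 h2' (If l D E) st) = subs (csem h1 h2 D (\<lambda>c' i' j'. st (c'(l := True)) i' j')) (csem h1 h2' D (\<lambda>c' i' j'. st (c'(l := True)) i' j'))"
        by (simp add: E0 subs_def fun_eq_iff)
      then show "\<exists>y. eqon De (subs (csem h1 h2 (If l D E) st) (csem h1 h2' (If l D E) st)) (F (subs (h2 y) (h2' y)))"
        using y by metis
    qed
  next
    case False
    then have D0: "count_hole2 D = 0" using ifte.prems by simp
    then obtain F where F: "MA2 Th De E F" using ifte False by auto
    show ?thesis
    proof (rule exI[of _ F], unfold MA2_def, intro conjI allI impI)
      show "lin F" "resp Th De F" using F unfolding MA2_def by auto
      fix h1 h2 h2' st assume g: "good Th h1" "good Th h2" "good Th h2'"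
      have E0: "csem h1 h2' D = csem h1 h2 D" using D0 indep2 by metis
      obtain y where y: "eqon De (subs (csem h1 h2 E (\<lambda>c' i' j'. st (c'(l := False)) i' j')) (csem h1 h2' E (\<lambda>c' i' j'. st (c'(l := False)) i' j'))) (F (subs (h2 y) (h2' y)))"
        using F g unfolding MA2_def by blast
      have "subs (csem h1 h2 (If l D E) st) (csem h1 h2' (If l D E) st) = subs (csem h1 h2 E (\<lambda>c' i' j'. st (c'(l := False)) i' j')) (csem h1 h2' E (\<lambda>c' i' j'. st (c'(l := False)) i' j'))"
        by (simp add: E0 subs_def fun_eq_iff)
      then show "\<exists>y. eqon De (subs (csem h1 h2 (If l D E) st) (csem h1 h2' (If l D E) st)) (F (subs (h2 y) (h2' y)))"
        using y by metis
    qed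
  qed
qed

lemma claimA1:
  fixes Th Ga De :: "'l env"
  shows "typing Th Ga C De \<Longrightarrow> count_hole2 C = 0 \<Longrightarrow> count_hole1 C \<le> 1 \<Longrightarrow> \<exists>E. MA1 Th De C E"
proof (induction rule: typing.induct)
  case (hole2) then show ?case by simp
next
  case (hole1)
  show ?case
    by (rule exI[of _ "\<lambda>x. x"]) (auto simp: MA1_def lin_id resp_id csem_Hole1 intro!: exI eqon_refl)
next
  case (gate Xi ls g rs)
  show ?case
    by (rule exI[of _ "\<lambda>x. zst"]) (auto simp: MA1_def lin_const0 resp_const0 subs_self eqon_refl)
next
  case (seq Ga C Ps D De)
  show ?case
  proof (cases "count_hole1 D = 0")
    case True
    then obtain E where E: "MA1 Th Ps C E" using seq by auto
    show ?thesis
    proof (rule exI[of _ "\<lambda>x. csem0 D (E x)"], unfold MA1_def, intro conjI allI impI)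
      show "lin (\<lambda>x. csem0 D (E x))" using E lin_csem0 lin_comp unfolding MA1_def by blast
      show "resp Th De (\<lambda>x. csem0 D (E x))" using E resp_csem0[OF seq.hyps(2)] resp_comp unfolding MA1_def by blast
      fix h1 h1' h2 st assume g: "good Th h1" "good Th h1'" "good Th h2"
      obtain y where y: "eqon Ps (subs (csem h1 h2 C st) (csem h1' h2 C st)) (E (subs (h1 y) (h1' y)))"
        using E g unfolding MA1_def by blast
      have D0: "csem h h' D = csem0 D" for h h' using True seq.prems by (simp add: csem0_eq)
      have "subs (csem h1 h2 (Seq C D) st) (csem h1' h2 (Seq C D) st)
          = csem0 D (subs (csem h1 h2 C st) (csem h1' h2 C st))"
        by (simp add: D0 lin_sub[OF lin_csem0])
      then show "\<exists>y. eqon De (subs (csem h1 h2 (Seq C D) st) (csem h1' h2 (Seq C D) st)) (csem0 D (E (subs (h1 y) (h1' y))))"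
        using y resp_csem0[OF seq.hyps(2)] unfolding resp_def by metis
    qed
  next
    case False
    then have C0: "count_hole1 C = 0" using seq.prems by simp
    then obtain E where E: "MA1 Th De D E" using seq by auto
    show ?thesis
    proof (rule exI[of _ E], unfold MA1_def, intro conjI allI impI)
      show "lin E" "resp Th De E" using E unfolding MA1_def by auto
      fix h1 h1' h2 st assume g: "good Th h1" "good Th h1'" "good Th h2"
      have "csem h1' h2 C = csem h1 h2 C" using C0 indep1 by metis
      then show "\<exists>y. eqon De (subs (csem h1 h2 (Seq C D) st) (csem h1' h2 (Seq C D) st)) (E (subs (h1 y) (h1' y)))"
        using E g unfolding MA1_def by simp
    qed
  qed
next
  case (ifte Ga D De E l)
  show ?case
  proof (cases "count_hole1 E = 0")
    case True
    then obtain F where F: "MA1 Th De D F" using ifte by auto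
    show ?thesis
    proof (rule exI[of _ F], unfold MA1_def, intro conjI allI impI)
      show "lin F" "resp Th De F" using F unfolding MA1_def by auto
      fix h1 h1' h2 st assume g: "good Th h1" "good Th h1'" "good Th h2"
      have E0: "csem h1' h2 E = csem h1 h2 E" using True indep1 by metis
      obtain y where y: "eqon De (subs (csem h1 h2 D (\<lambda>c' i' j'. st (c'(l := True)) i' j')) (csem h1' h2 D (\<lambda>c' i' j'. st (c'(l := True)) i' j'))) (F (subs (h1 y) (h1' y)))"
        using F g unfolding MA1_def by blast
      have "subs (csem h1 h2 (If l D E) st) (csem h1' h2 (If l D E) st) = subs (csem h1 h2 D (\<lambda>c' i' j'. st (c'(l := True)) i' j')) (csem h1' h2 D (\<lambda>c' i' j'. st (c'(l := True)) i' j'))"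
        by (simp add: E0 subs_def fun_eq_iff)
      then show "\<exists>y. eqon De (subs (csem h1 h2 (If l D E) st) (csem h1' h2 (If l D E) st)) (F (subs (h1 y) (h1' y)))"
        using y by metis
    qed
  next
    case False
    then have D0: "count_hole1 D = 0" using ifte.prems by simp
    then obtain F where F: "MA1 Th De E F" using ifte False by auto
    show ?thesis
    proof (rule exI[of _ F], unfold MA1_def, intro conjI allI impI)
      show "lin F" "resp Th De F" using F unfolding MA1_def by auto
      fix h1 h1' h2 st assume g: "good Th h1" "good Th h1'" "good Th h2"
      have E0: "csem h1' h2 D = csem h1 h2 D" using D0 indep1 by metis
      obtain y where y: "eqon De (subs (csem h1 h2 E (\<lambda>c' i' j'. st (c'(l := False)) i' j')) (csem h1' h2 E (\<lambda>c' i' j'. st (c'(l := False)) i' j'))) (F (subs (h1 y) (h1' y)))"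
        using F g unfolding MA1_def by blast
      have "subs (csem h1 h2 (If l D E) st) (csem h1' h2 (If l D E) st) = subs (csem h1 h2 E (\<lambda>c' i' j'. st (c'(l := False)) i' j')) (csem h1' h2 E (\<lambda>c' i' j'. st (c'(l := False)) i' j'))"
        by (simp add: E0 subs_def fun_eq_iff)
      then show "\<exists>y. eqon De (subs (csem h1 h2 (If l D E) st) (csem h1' h2 (If l D E) st)) (F (subs (h1 y) (h1' y)))"
        using y by metis
    qed
  qed
qed



definition Delta :: "('l state \<Rightarrow> 'l state) \<Rightarrow> ('l state \<Rightarrow> 'l state) \<Rightarrow> ('l state \<Rightarrow> 'l state) \<Rightarrow> ('l state \<Rightarrow> 'l state) \<Rightarrow> 'l circ \<Rightarrow> 'l state \<Rightarrow> 'l state" where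
  "Delta h1 h1' h2 h2' C st = addst (subs (subs (csem h1 h2 C st) (csem h1' h2 C st)) (csem h1 h2' C st)) (csem h1' h2' C st)"

definition MM :: "bool \<Rightarrow> 'l env \<Rightarrow> 'l env \<Rightarrow> 'l circ \<Rightarrow> ('l state \<Rightarrow> 'l state) \<Rightarrow> bool" where
  "MM b Th De C E \<longleftrightarrow> lin E \<and> resp Th De E \<and> (\<forall>h1 h1' h2 h2' st. good Th h1 \<longrightarrow> good Th h1' \<longrightarrow> good Th h2 \<longrightarrow> good Th h2' \<longrightarrow>
     (\<exists>y. eqon De (Delta h1 h1' h2 h2' C st) (E (if b then subs (h1 y) (h1' y) else subs (h2 y) (h2' y)))))"

lemma Delta_zero: "count_hole1 C = 0 \<or> count_hole2 C = 0 \<Longrightarrow> Delta h1 h1' h2 h2' C st = zst"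
proof -
  assume "count_hole1 C = 0 \<or> count_hole2 C = 0"
  then show ?thesis
  proof
    assume "count_hole1 C = 0"
    then have "csem h1' h2 C = csem h1 h2 C" "csem h1' h2' C = csem h1 h2' C" using indep1 by metis+
    then show ?thesis by (simp add: Delta_def addst_def subs_def zst_def fun_eq_iff)
  next
    assume "count_hole2 C = 0"
    then have "csem h1 h2' C = csem h1 h2 C" "csem h1' h2' C = csem h1' h2 C" using indep2 by metis+
    then show ?thesis by (simp add: Delta_def addst_def subs_def zst_def fun_eq_iff)
  qed
qed

lemma MM_zero: "count_hole1 C = 0 \<or> count_hole2 C = 0 \<Longrightarrow> MM False Th De C (\<lambda>x. zst)"
  by (simp add: MM_def Delta_zero lin_const0 resp_const0 eqon_refl)

lemma claimM:
  fixes Th Ga De :: "'l env"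
  shows "typing Th Ga C De \<Longrightarrow> count_hole1 C \<le> 1 \<Longrightarrow> count_hole2 C \<le> 1 \<Longrightarrow> \<exists>b E. MM b Th De C E"
proof (induction rule: typing.induct)
  case (hole1) then show ?case using MM_zero[of Hole1] by fastforce
next
  case (hole2) then show ?case using MM_zero[of Hole2] by fastforce
next
  case (gate Xi ls g rs) show ?case using MM_zero[of "Gate g ls rs"] by fastforce
next
  case (seq Ga C Ps D De)
  show ?case
  proof (cases "count_hole1 D = 0 \<and> count_hole2 D = 0")
    case True
    then obtain b E where E: "MM b Th Ps C E" using seq by auto
    have D0: "csem h h' D = csem0 D" for h h' using True by (simp add: csem0_eq)
    have eq: "Delta h1 h1' h2 h2' (Seq C D) st = csem0 D (Delta h1 h1' h2 h2' C st)" for h1 h1' h2 h2' st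
      by (simp add: Delta_def D0 lin_sub[OF lin_csem0] lin_add[OF lin_csem0])
    have "MM b Th De (Seq C D) (\<lambda>x. csem0 D (E x))"
      unfolding MM_def
    proof (intro conjI allI impI)
      show "lin (\<lambda>x. csem0 D (E x))" using E lin_csem0 lin_comp unfolding MM_def by blast
      show "resp Th De (\<lambda>x. csem0 D (E x))" using E resp_csem0[OF seq.hyps(2)] resp_comp unfolding MM_def by blast
      fix h1 h1' h2 h2' st assume g: "good Th h1" "good Th h1'" "good Th h2" "good Th h2'"
      obtain y where y: "eqon Ps (Delta h1 h1' h2 h2' C st) (E (if b then subs (h1 y) (h1' y) else subs (h2 y) (h2' y)))"
        using E g unfolding MM_def by blast
      then show "\<exists>y. eqon De (Delta h1 h1' h2 h2' (Seq C D) st) (csem0 D (E (if b then subs (h1 y) (h1' y) else subs (h2 y) (h2' y))))"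
        unfolding eq using resp_csem0[OF seq.hyps(2)] unfolding resp_def by blast
    qed
    then show ?thesis by blast
  next
    case ND: False
    show ?thesis
    proof (cases "count_hole1 C = 0 \<and> count_hole2 C = 0")
      case True
      then obtain b E where E: "MM b Th De D E" using seq by auto
      have C0: "csem h h' C = csem0 C" for h h' using True by (simp add: csem0_eq)
      have eq: "Delta h1 h1' h2 h2' (Seq C D) st = Delta h1 h1' h2 h2' D (csem0 C st)" for h1 h1' h2 h2' st
        by (simp add: Delta_def C0)
      have "MM b Th De (Seq C D) E" using E unfolding MM_def eq by blast
      then show ?thesis by blast
    next
      case NC: False
      show ?thesis
      proof (cases "count_hole1 C = 0")
        case False
        then have cs: "count_hole1 D = 0" "count_hole2 C = 0" using ND NC seq.prems by auto
        then obtain E where E: "MA2 Th De D E" using claimA2[OF seq.hyps(2)] seq.prems by auto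
        have "MM False Th De (Seq C D) E"
          unfolding MM_def
        proof (intro conjI allI impI)
          show "lin E" "resp Th De E" using E unfolding MA2_def by auto
          fix h1 h1' h2 h2' st assume g: "good Th h1" "good Th h1'" "good Th h2" "good Th h2'"
          define a where "a = csem h1 h2 C st"
          define a' where "a' = csem h1' h2 C st"
          have i1: "csem h1' h D = csem h1 h D" for h using cs indep1 by metis
          have i2: "csem h h2' C = csem h h2 C" for h using cs indep2 by metis
          have l1: "lin (csem h1 h2 D)" "lin (csem h1 h2' D)" using g lin_csem unfolding good_def by auto
          have eq: "Delta h1 h1' h2 h2' (Seq C D) st = subs (csem h1 h2 D (subs a a')) (csem h1 h2' D (subs a a'))"
            unfolding Delta_def csem.simps i1 i2 a_def a'_def lin_sub[OF l1(1)] lin_sub[OF l1(2)]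
            by (simp add: fun_eq_iff addst_def subs_def)
          obtain y where "eqon De (subs (csem h1 h2 D (subs a a')) (csem h1 h2' D (subs a a'))) (E (subs (h2 y) (h2' y)))"
            using E g unfolding MA2_def by blast
          then show "\<exists>y. eqon De (Delta h1 h1' h2 h2' (Seq C D) st) (E (if False then subs (h1 y) (h1' y) else subs (h2 y) (h2' y)))"
            unfolding eq by auto
        qed
        then show ?thesis by blast
      next
        case True
        then have cs: "count_hole2 D = 0" "count_hole1 C = 0" using ND NC seq.prems by auto
        then obtain E where E: "MA1 Th De D E" using claimA1[OF seq.hyps(2)] seq.prems by auto
        have "MM True Th De (Seq C D) E"
          unfolding MM_def
        proof (intro conjI allI impI)
          show "lin E" "resp Th De E" using E unfolding MA1_def by auto
          fix h1 h1' h2 h2' st assume g: "good Th h1" "good Th h1'" "good Th h2" "good Th h2'"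
          define x where "x = csem h1 h2 C st"
          define x' where "x' = csem h1 h2' C st"
          have i2: "csem h h2' D = csem h h2 D" for h using cs indep2 by metis
          have i1: "csem h1' h C = csem h1 h C" for h using cs indep1 by metis
          have l1: "lin (csem h1 h2 D)" "lin (csem h1' h2 D)" using g lin_csem unfolding good_def by auto
          have eq: "Delta h1 h1' h2 h2' (Seq C D) st = subs (csem h1 h2 D (subs x x')) (csem h1' h2 D (subs x x'))"
            unfolding Delta_def csem.simps i1 i2 x_def x'_def lin_sub[OF l1(1)] lin_sub[OF l1(2)]
            by (simp add: fun_eq_iff addst_def subs_def)
          obtain y where "eqon De (subs (csem h1 h2 D (subs x x')) (csem h1' h2 D (subs x x'))) (E (subs (h1 y) (h1' y)))"
            using E g unfolding MA1_def by blast
          then show "\<exists>y. eqon De (Delta h1 h1' h2 h2' (Seq C D) st) (E (if True then subs (h1 y) (h1' y) else subs (h2 y) (h2' y)))"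
            unfolding eq by auto
        qed
        then show ?thesis by blast
      qed
    qed
  qed
next
  case (ifte Ga D De E l)
  have split: "Delta h1 h1' h2 h2' (If l D E) st = addst (Delta h1 h1' h2 h2' D (\<lambda>c' i' j'. st (c'(l := True)) i' j'))
      (Delta h1 h1' h2 h2' E (\<lambda>c' i' j'. st (c'(l := False)) i' j'))" for h1 h1' h2 h2' st
    by (simp add: Delta_def addst_def subs_def fun_eq_iff)
  show ?case
  proof (cases "count_hole1 E = 0 \<or> count_hole2 E = 0")
    case True
    then obtain b F where F: "MM b Th De D F" using ifte by auto
    have "Delta h1 h1' h2 h2' (If l D E) st = Delta h1 h1' h2 h2' D (\<lambda>c' i' j'. st (c'(l := True)) i' j')" for h1 h1' h2 h2' st
      unfolding split Delta_zero[OF True] by (simp add: addst_def zst_def)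
    then have "MM b Th De (If l D E) F" using F unfolding MM_def by metis
    then show ?thesis by blast
  next
    case False
    then have "count_hole1 D = 0" using ifte.prems by auto
    then have Dz: "Delta h1 h1' h2 h2' D st = zst" for h1 h1' h2 h2' st using Delta_zero by blast
    obtain b F where F: "MM b Th De E F" using ifte by auto
    have "Delta h1 h1' h2 h2' (If l D E) st = Delta h1 h1' h2 h2' E (\<lambda>c' i' j'. st (c'(l := False)) i' j')" for h1 h1' h2 h2' st
      unfolding split Dz by (simp add: addst_def zst_def)
    then have "MM b Th De (If l D E) F" using F unfolding MM_def by metis
    then show ?thesis by blast
  qed
qed




lemma rank_contra:
  fixes Cc W :: "nat \<Rightarrow> nat \<Rightarrow> complex"
  assumes h: "\<And>k m. k < 7 \<Longrightarrow> m < 7 \<Longrightarrow> (\<Sum>j<6. Cc k j * W j m) = (if k = m then -2 else 0)"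
  shows False
proof -
  define A where "A = mat 7 7 (\<lambda>(k,j). if j < 6 then Cc k j else 0)"
  define B where "B = mat 7 7 (\<lambda>(j,m). if j < 6 then W j m else 0)"
  have A: "A \<in> carrier_mat 7 7" and B: "B \<in> carrier_mat 7 7" by (auto simp: A_def B_def)
  have s7: "(\<Sum>j\<in>{0..<7}. f j) = (\<Sum>j<6. f j) + f 6" for f :: "nat \<Rightarrow> complex"
    by (simp add: atLeast0LessThan numeral_eq_Suc)
  have AB: "A * B = (-2) \<cdot>\<^sub>m 1\<^sub>m 7"
  proof (rule eq_matI)
    fix k m assume km: "k < dim_row ((-2) \<cdot>\<^sub>m 1\<^sub>m 7 :: complex mat)" "m < dim_col ((-2) \<cdot>\<^sub>m 1\<^sub>m 7 :: complex mat)"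
    then have km': "k < 7" "m < 7" by auto
    have "(A * B) $$ (k, m) = (\<Sum>j\<in>{0..<7}. A $$ (k, j) * B $$ (j, m))"
      using km' A B by (simp add: scalar_prod_def)
    also have "\<dots> = (\<Sum>j<6. Cc k j * W j m)"
      unfolding s7 using km' by (simp add: A_def B_def)
    also have "\<dots> = ((-2) \<cdot>\<^sub>m 1\<^sub>m 7) $$ (k, m)" using h km' by simp
    finally show "(A * B) $$ (k, m) = ((-2) \<cdot>\<^sub>m 1\<^sub>m 7) $$ (k, m)" .
  qed (auto simp: A_def B_def)
  have "A *\<^sub>v unit_vec 7 6 = 0\<^sub>v 7"
  proof (rule eq_vecI)
    fix k assume "k < dim_vec (0\<^sub>v 7 :: complex vec)"
    then have k: "k < 7" by simp
    have "(A *\<^sub>v unit_vec 7 6) $ k = (\<Sum>j\<in>{0..<7}. A $$ (k, j) * unit_vec 7 6 $ j)"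
      using k A by (simp add: scalar_prod_def row_def)
    also have "\<dots> = 0" unfolding s7 using k by (simp add: A_def)
    finally show "(A *\<^sub>v unit_vec 7 6) $ k = 0\<^sub>v 7 $ k" using k by simp
  qed (simp add: A_def)
  moreover have "unit_vec 7 6 \<noteq> (0\<^sub>v 7 :: complex vec)"
  proof
    assume "unit_vec 7 6 = (0\<^sub>v 7 :: complex vec)"
    then have "unit_vec 7 6 $ 6 = (0\<^sub>v 7 :: complex vec) $ 6" by simp
    then show False by simp
  qed
  ultimately have "\<exists>v. v \<in> carrier_vec 7 \<and> v \<noteq> 0\<^sub>v 7 \<and> A *\<^sub>v v = 0\<^sub>v 7"
    by (intro exI[of _ "unit_vec 7 6"]) (simp add: unit_vec_carrier)
  then have "det A = 0" using det_0_iff_vec_prod_zero_field[OF A] by blast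
  then have "det (A * B) = 0" using det_mult[OF A B] by simp
  moreover have "det ((-2) \<cdot>\<^sub>m 1\<^sub>m 7 :: complex mat) \<noteq> 0" by simp
  ultimately show False using AB by simp
qed




definition indb :: "'l \<Rightarrow> 'l \<Rightarrow> bool \<Rightarrow> bool \<Rightarrow> 'l \<Rightarrow> bool" where
  "indb l1 l2 b1 b2 = (\<lambda>x. (x = l1 \<and> b1) \<or> (x = l2 \<and> b2))"
definition ind :: "'l \<Rightarrow> 'l \<Rightarrow> nat \<Rightarrow> 'l \<Rightarrow> bool" where
  "ind l1 l2 p = indb l1 l2 (2 \<le> p) (odd p)"

lemma four_cases: "p < (4::nat) \<Longrightarrow> p = 0 \<or> p = 1 \<or> p = 2 \<or> p = 3" by arith

lemma sum4: "(\<Sum>p<4. f p) = f 0 + f 1 + f 2 + f (3::nat)"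
  by (simp add: lessThan_Suc numeral_eq_Suc ac_simps)

lemma lists2: "{xs::bool list. length xs = length [a, b]} = {[False,False],[False,True],[True,False],[True,True]}"
  by (auto simp: length_Suc_conv)

lemma ind_vals: "ind l1 l2 0 = indb l1 l2 False False" "ind l1 l2 1 = indb l1 l2 False True"
  "ind l1 l2 2 = indb l1 l2 True False" "ind l1 l2 3 = indb l1 l2 True True" "ind l1 l2 (Suc 0) = indb l1 l2 False True"
  by (simp_all add: ind_def)

lemma bidx_vals: "bidx [False,False] = 0" "bidx [False,True] = 1" "bidx [True,False] = 2" "bidx [True,True] = 3"
  by simp_all

lemma usem_coord:
  fixes l1 l2 :: 'l
  assumes "l1 \<noteq> l2" "r < 4" "s < 4"
  shows "usem M [l1,l2] [l1,l2] st c (ind l1 l2 r) (ind l1 l2 s) =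
    (\<Sum>p<4. \<Sum>q<4. M $$ (r,p) * st c (ind l1 l2 p) (ind l1 l2 q) * cnj (M $$ (s,q)))"
proof -
  have sv: "setv (clr (ind l1 l2 t) [l1,l2]) [l1,l2] [a,b] = indb l1 l2 a b" for t a b
    using assms(1) by (auto simp: fun_eq_iff clr_def indb_def ind_def)
  have bi: "bidx (map (ind l1 l2 t) [l1,l2]) = t" if "t < 4" for t
    using assms(1) four_cases[OF that] by (auto simp: ind_def indb_def)
  have L: "(\<Sum>a\<in>{xs::bool list. length xs = length [l1,l2]}. g a) = g [False,False] + g [False,True] + g [True,False] + g [True,True]"
    for g :: "bool list \<Rightarrow> complex"
    unfolding lists2 by (simp add: ac_simps)
  have iv: "indb l1 l2 False False = ind l1 l2 0" "indb l1 l2 False True = ind l1 l2 1"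
    "indb l1 l2 True False = ind l1 l2 2" "indb l1 l2 True True = ind l1 l2 3"
    by (simp_all add: ind_def)
  show ?thesis
    unfolding usem_def L bi[OF assms(2)] bi[OF assms(3)] sum4 sv bidx_vals iv
    by (simp only: ac_simps distrib_left distrib_right)
qed


definition Vd :: "complex mat" where
  "Vd = mat 4 4 (\<lambda>(r,s). if r = s then (if r = 3 then -1 else 1) else 0)"
definition Pm :: "nat list \<Rightarrow> complex mat" where
  "Pm pp = mat 4 4 (\<lambda>(r,s). if r = pp ! s then 1 else 0)"

lemma sum4': "(\<Sum>p\<in>{0..<4}. f p) = f 0 + f 1 + f 2 + f (3::nat)"
  by (simp add: atLeast0LessThan sum4)

lemma adj_index: 
  assumes "A \<in> carrier_mat n n" "i < n" "j < n" shows "mat_adjoint A $$ (i,j) = cnj (A $$ (j,i))"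
proof -
  have d: "dim_col A = n" "dim_row A = n" using assms(1) by auto
  have "mat_adjoint A $$ (i,j) = (map conjugate (cols A)) ! i $ j"
    unfolding mat_adjoint_def d(2) by (rule mat_of_rows_index) (simp_all add: d assms)
  also have "\<dots> = cnj (A $$ (j,i))" using assms d by simp
  finally show ?thesis .
qed

lemma prod_index4:
  assumes "A \<in> carrier_mat 4 4" "B \<in> carrier_mat 4 4" "i < 4" "j < 4"
  shows "(A * B) $$ (i,j) = (\<Sum>s<4. A $$ (i,s) * B $$ (s,j))"
proof -
  have "(A * B) $$ (i,j) = row A i \<bullet> col B j" using assms by (intro index_mult_mat) auto
  also have "\<dots> = (\<Sum>s\<in>{0..<4}. row A i $ s * col B j $ s)" using assms by (simp add: scalar_prod_def)
  also have "\<dots> = (\<Sum>s\<in>{0..<4}. A $$ (i,s) * B $$ (s,j))" using assms by (intro sum.cong) auto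
  finally show ?thesis by (simp add: atLeast0LessThan)
qed

lemma adj_carrier: "A \<in> carrier_mat n n \<Longrightarrow> mat_adjoint A \<in> carrier_mat n n"
  unfolding mat_adjoint_def by (intro carrier_matI) auto

lemma prod_adj_index:
  assumes "A \<in> carrier_mat 4 4" "i < 4" "j < 4"
  shows "(A * mat_adjoint A) $$ (i,j) = (\<Sum>s<4. A $$ (i,s) * cnj (A $$ (j,s)))"
  unfolding prod_index4[OF assms(1) adj_carrier[OF assms(1)] assms(2,3)]
  using assms by (intro sum.cong) (auto simp: adj_index)
lemma unitary_Vd: "unitary4 Vd"
  unfolding unitary4_def
proof
  show c: "Vd \<in> carrier_mat 4 4" by (simp add: Vd_def)
  show "Vd * mat_adjoint Vd = 1\<^sub>m 4"
  proof (rule eq_matI)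
    fix i j assume "i < dim_row (1\<^sub>m 4 :: complex mat)" "j < dim_col (1\<^sub>m 4 :: complex mat)"
    then have ij: "i < 4" "j < 4" by auto
    show "(Vd * mat_adjoint Vd) $$ (i, j) = 1\<^sub>m 4 $$ (i, j)"
      unfolding prod_adj_index[OF c ij] sum4 using ij four_cases[OF ij(1)] four_cases[OF ij(2)]
      by (auto simp: Vd_def)
  qed (auto simp: Vd_def mat_adjoint_def)
qed

lemma unitary_Pm_gen:
  assumes "\<And>i j. i < 4 \<Longrightarrow> j < 4 \<Longrightarrow> (\<Sum>s<4. (if i = pp ! s then 1 else 0) * (if j = pp ! s then 1 else 0) :: complex) = (if i = j then 1 else 0)"
  shows "unitary4 (Pm pp)"
  unfolding unitary4_def
proof
  show "Pm pp \<in> carrier_mat 4 4" by (simp add: Pm_def)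
  show "Pm pp * mat_adjoint (Pm pp) = 1\<^sub>m 4"
  proof (rule eq_matI)
    fix i j assume "i < dim_row (1\<^sub>m 4 :: complex mat)" "j < dim_col (1\<^sub>m 4 :: complex mat)"
    then have ij: "i < 4" "j < 4" by auto
    have c: "Pm pp \<in> carrier_mat 4 4" by (simp add: Pm_def)
    have "(Pm pp * mat_adjoint (Pm pp)) $$ (i, j) = (\<Sum>s<4. (if i = pp ! s then 1 else 0) * (if j = pp ! s then 1 else 0) :: complex)"
      unfolding prod_adj_index[OF c ij] using ij by (intro sum.cong) (auto simp: Pm_def)
    then show "(Pm pp * mat_adjoint (Pm pp)) $$ (i, j) = 1\<^sub>m 4 $$ (i, j)"
      using assms ij by simp
  qed (auto simp: Pm_def mat_adjoint_def)
qed

lemma unitary_Pm1: "unitary4 (Pm [0,3,2,1])"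
  by (rule unitary_Pm_gen) (auto simp: sum4 dest!: four_cases)

lemma unitary_I: "unitary4 (1\<^sub>m 4)"
  unfolding unitary4_def
proof
  show c: "1\<^sub>m 4 \<in> carrier_mat 4 4" by simp
  show "1\<^sub>m 4 * mat_adjoint (1\<^sub>m 4) = (1\<^sub>m 4 :: complex mat)"
  proof (rule eq_matI)
    fix i j assume "i < dim_row (1\<^sub>m 4 :: complex mat)" "j < dim_col (1\<^sub>m 4 :: complex mat)"
    then have ij: "i < 4" "j < 4" by auto
    show "(1\<^sub>m 4 * mat_adjoint (1\<^sub>m 4)) $$ (i, j) = (1\<^sub>m 4 :: complex mat) $$ (i, j)"
      unfolding prod_adj_index[OF c ij] sum4 using ij four_cases[OF ij(1)] four_cases[OF ij(2)]
      by auto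
  qed (auto simp: mat_adjoint_def)
qed

lemma colsum_Vd: "(\<Sum>p<4. (X :: complex mat) $$ (r,p) * Vd $$ (p,0)) = X $$ (r,0)"
  "(\<Sum>p<4. (X :: complex mat) $$ (r,p) * Vd $$ (p,3)) = - X $$ (r,3)"
  by (simp_all add: sum4 Vd_def)
lemma colsum_I: "(\<Sum>p<4. (X :: complex mat) $$ (r,p) * (1\<^sub>m 4) $$ (p,0)) = X $$ (r,0)"
  "(\<Sum>p<4. (X :: complex mat) $$ (r,p) * (1\<^sub>m 4) $$ (p,3)) = X $$ (r,3)"
  by (simp_all add: sum4)

lemma Pm_col: "r < 4 \<Longrightarrow> Pm pp $$ (r, 0) = (if r = pp ! 0 then 1 else 0)"
  "r < 4 \<Longrightarrow> Pm pp $$ (r, 3) = (if r = pp ! 3 then 1 else 0)"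
  by (simp_all add: Pm_def)

lemma unitary_Pm_0132: "unitary4 (Pm [0,1,3,2])"
  by (rule unitary_Pm_gen) (auto simp: sum4 dest!: four_cases)

lemma unitary_Pm_1230: "unitary4 (Pm [1,2,3,0])"
  by (rule unitary_Pm_gen) (auto simp: sum4 dest!: four_cases)

lemma unitary_Pm_1032: "unitary4 (Pm [1,0,3,2])"
  by (rule unitary_Pm_gen) (auto simp: sum4 dest!: four_cases)

lemma unitary_Pm_1023: "unitary4 (Pm [1,0,2,3])"
  by (rule unitary_Pm_gen) (auto simp: sum4 dest!: four_cases)

lemma unitary_Pm_2130: "unitary4 (Pm [2,1,3,0])"
  by (rule unitary_Pm_gen) (auto simp: sum4 dest!: four_cases)

lemma unitary_Pm_2031: "unitary4 (Pm [2,0,3,1])"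
  by (rule unitary_Pm_gen) (auto simp: sum4 dest!: four_cases)


lemma labels_Th: "labels_of [l1 \<mapsto> Qbit, l2 \<mapsto> Qbit] Bit = {}" "labels_of [l1 \<mapsto> Qbit, l2 \<mapsto> Qbit] Qbit = {l1, l2}"
  by (auto simp: labels_of_def)

lemma good_h: "good [l1 \<mapsto> Qbit, l2 \<mapsto> Qbit] (usem M [l1,l2] [l1,l2])"
  unfolding good_def by (simp add: lin_usem usem_resp labels_Th)

lemma ind_apply: "l1 \<noteq> l2 \<Longrightarrow> ind l1 l2 p l1 = (2 \<le> p)" "l1 \<noteq> l2 \<Longrightarrow> ind l1 l2 p l2 = odd p"
  by (auto simp: ind_def indb_def)

lemma ind_inj: "l1 \<noteq> l2 \<Longrightarrow> p < 4 \<Longrightarrow> q < 4 \<Longrightarrow> (ind l1 l2 p = ind l1 l2 q) = (p = q)"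
proof
  assume a: "l1 \<noteq> l2" "p < 4" "q < 4" "ind l1 l2 p = ind l1 l2 q"
  then have "ind l1 l2 p l1 = ind l1 l2 q l1" "ind l1 l2 p l2 = ind l1 l2 q l2" by auto
  then have "(2 \<le> p) = (2 \<le> q)" "odd p = odd q" using ind_apply[OF a(1)] by auto
  then show "p = q" using four_cases[OF a(2)] four_cases[OF a(3)] by auto
qed auto

lemma canon_Th:
  assumes "l1 \<noteq> l2" "canon_idx [l1 \<mapsto> Qbit, l2 \<mapsto> Qbit] c i j"
  shows "c = (\<lambda>_. False) \<and> (\<exists>r<4. i = ind l1 l2 r) \<and> (\<exists>s<4. j = ind l1 l2 s)"
proof -
  have cc: "canon {} c" "canon {l1,l2} i" "canon {l1,l2} j" using assms(2) by (auto simp: canon_idx_def labels_Th)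
  have ex: "\<exists>r<4. f = ind l1 l2 r" if "canon {l1,l2} f" for f
  proof -
    have f: "f = indb l1 l2 (f l1) (f l2)" using that by (auto simp: fun_eq_iff indb_def canon_def)
    show ?thesis
    proof (cases "f l1"; cases "f l2")
      assume "f l1" "f l2" then show ?thesis by (intro exI[of _ 3]) (subst f, simp add: ind_def)
    next
      assume "f l1" "\<not> f l2" then show ?thesis by (intro exI[of _ 2]) (subst f, simp add: ind_def)
    next
      assume "\<not> f l1" "f l2" then show ?thesis by (intro exI[of _ 1]) (subst f, simp add: ind_def)
    next
      assume "\<not> f l1" "\<not> f l2" then show ?thesis by (intro exI[of _ 0]) (subst f, simp add: ind_def)
    qed
  qed
  show ?thesis using cc ex by (auto simp: canon_def fun_eq_iff)
qed

lemma canon_ind: "canon_idx [l1 \<mapsto> Qbit, l2 \<mapsto> Qbit] (\<lambda>_. False) (ind l1 l2 r) (ind l1 l2 s)"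
  by (auto simp: canon_idx_def labels_Th canon_def ind_def indb_def)

lemma compose:
  fixes l1 l2 :: 'l
  assumes l: "l1 \<noteq> l2" and rs: "r < 4" "s < 4"
    and st: "\<And>p q. p < 4 \<Longrightarrow> q < 4 \<Longrightarrow> st c (ind l1 l2 p) (ind l1 l2 q) = (if p = 0 \<and> q = 3 then 1 else 0)"
  shows "usem X [l1,l2] [l1,l2] (usem Y [l1,l2] [l1,l2] st) c (ind l1 l2 r) (ind l1 l2 s)
    = (\<Sum>p<4. X $$ (r,p) * Y $$ (p,0)) * cnj (\<Sum>q<4. X $$ (s,q) * Y $$ (q,3))"
proof -
  have inner: "usem Y [l1,l2] [l1,l2] st c (ind l1 l2 p) (ind l1 l2 q) = Y $$ (p,0) * cnj (Y $$ (q,3))"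
    if "p < 4" "q < 4" for p q
  proof -
    have "usem Y [l1,l2] [l1,l2] st c (ind l1 l2 p) (ind l1 l2 q)
      = (\<Sum>p'<4. \<Sum>q'<4. Y $$ (p,p') * (if p' = 0 \<and> q' = 3 then 1 else 0) * cnj (Y $$ (q,q')))"
      unfolding usem_coord[OF l that] by (intro sum.cong refl) (simp add: st)
    also have "\<dots> = Y $$ (p,0) * cnj (Y $$ (q,3))" by (simp add: sum4)
    finally show ?thesis .
  qed
  have "usem X [l1,l2] [l1,l2] (usem Y [l1,l2] [l1,l2] st) c (ind l1 l2 r) (ind l1 l2 s)
     = (\<Sum>p<4. \<Sum>q<4. X $$ (r,p) * (Y $$ (p,0) * cnj (Y $$ (q,3))) * cnj (X $$ (s,q)))"
    unfolding usem_coord[OF l rs] by (intro sum.cong refl) (simp add: inner)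
  also have "\<dots> = (\<Sum>p<4. X $$ (r,p) * Y $$ (p,0)) * (\<Sum>q<4. cnj (X $$ (s,q) * Y $$ (q,3)))"
    unfolding sum_product by (intro sum.cong refl) (simp add: ac_simps)
  also have "\<dots> = (\<Sum>p<4. X $$ (r,p) * Y $$ (p,0)) * cnj (\<Sum>q<4. X $$ (s,q) * Y $$ (q,3))"
    by (simp add: cnj_sum)
  finally show ?thesis .
qed


definition mst :: "'l \<Rightarrow> 'l \<Rightarrow> nat \<Rightarrow> nat \<Rightarrow> 'l state" where
  "mst l1 l2 a b = (\<lambda>c i j. if c = (\<lambda>_. False) \<and> i = ind l1 l2 a \<and> j = ind l1 l2 b then 1 else 0)"

definition qa :: "nat \<Rightarrow> nat" where "qa j = [0,1,2,3,3,3] ! j"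
definition qb :: "nat \<Rightarrow> nat" where "qb j = [3,3,3,0,1,2] ! j"

definition t6 :: "'l \<Rightarrow> 'l \<Rightarrow> 'l state \<Rightarrow> nat \<Rightarrow> 'l state" where
  "t6 l1 l2 y j = smul (-2 * y (\<lambda>_. False) (ind l1 l2 (qa j)) (ind l1 l2 (qb j))) (mst l1 l2 (qa j) (qb j))"

definition S6 :: "'l \<Rightarrow> 'l \<Rightarrow> 'l state \<Rightarrow> 'l state" where
  "S6 l1 l2 y = addst (t6 l1 l2 y 0) (addst (t6 l1 l2 y 1) (addst (t6 l1 l2 y 2) (addst (t6 l1 l2 y 3)
      (addst (t6 l1 l2 y 4) (t6 l1 l2 y 5)))))"

lemma mst_ind: "l1 \<noteq> l2 \<Longrightarrow> r < 4 \<Longrightarrow> s < 4 \<Longrightarrow> a < 4 \<Longrightarrow> b < 4 \<Longrightarrow>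
  mst l1 l2 a b (\<lambda>_. False) (ind l1 l2 r) (ind l1 l2 s) = (if r = a \<and> s = b then 1 else 0)"
  by (simp add: mst_def ind_inj)

lemma dV:
  fixes l1 l2 :: 'l
  assumes l: "l1 \<noteq> l2"
  shows "eqon [l1 \<mapsto> Qbit, l2 \<mapsto> Qbit] (subs (usem Vd [l1,l2] [l1,l2] y) (usem (1\<^sub>m 4) [l1,l2] [l1,l2] y)) (S6 l1 l2 y)"
  unfolding eqon_def
proof (intro allI impI)
  fix c i j :: "'l \<Rightarrow> bool"
  assume "canon_idx [l1 \<mapsto> Qbit, l2 \<mapsto> Qbit] c i j"
  then obtain r s where rs: "r < 4" "s < 4" "c = (\<lambda>_. False)" "i = ind l1 l2 r" "j = ind l1 l2 s"
    using canon_Th[OF l] by blast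
  have m: "mst l1 l2 (qa k) (qb k) (\<lambda>_. False) (ind l1 l2 r) (ind l1 l2 s) = (if r = qa k \<and> s = qb k then 1 else 0)" if "k < 6" for k
    using that rs l by (intro mst_ind) (auto simp: qa_def qb_def less_Suc_eq numeral_eq_Suc)
  have R: "S6 l1 l2 y (\<lambda>_. False) (ind l1 l2 r) (ind l1 l2 s) =
     (\<Sum>k<6. -2 * y (\<lambda>_. False) (ind l1 l2 (qa k)) (ind l1 l2 (qb k)) * (if r = qa k \<and> s = qb k then 1 else 0))"
    by (simp add: S6_def t6_def addst_def smul_def m lessThan_Suc numeral_eq_Suc ac_simps)
  show "subs (usem Vd [l1,l2] [l1,l2] y) (usem (1\<^sub>m 4) [l1,l2] [l1,l2] y) c i j = S6 l1 l2 y c i j"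
    unfolding rs(3,4,5) R subs_def usem_coord[OF l rs(1,2)]
    using four_cases[OF rs(1)] four_cases[OF rs(2)]
    by (auto simp: sum4 Vd_def qa_def qb_def lessThan_Suc numeral_eq_Suc)
qed




definition pa :: "nat \<Rightarrow> nat" where "pa k = [0,0,1,1,1,2,2] ! k"
definition pb :: "nat \<Rightarrow> nat" where "pb k = [1,2,0,2,3,0,1] ! k"

lemma seven_cases: "k < (7::nat) \<Longrightarrow> k = 0 \<or> k = 1 \<or> k = 2 \<or> k = 3 \<or> k = 4 \<or> k = 5 \<or> k = 6" by arith

lemma pab_vals: "pa 0 = 0" "pb 0 = 1" "pa 1 = 0" "pb 1 = 2" "pa 2 = 1" "pb 2 = 0" "pa 3 = 1" "pb 3 = 2"
  "pa 4 = 1" "pb 4 = 3" "pa 5 = 2" "pb 5 = 0" "pa 6 = 2" "pb 6 = 1" "pa (Suc 0) = 0" "pb (Suc 0) = 2"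
  by (simp_all add: pa_def pb_def numeral_eq_Suc)

lemma pab_lt: "k < 7 \<Longrightarrow> pa k < 4 \<and> pb k < 4"
  by (drule seven_cases) (elim disjE; simp add: pab_vals)


lemma pab_prop: "k < 7 \<Longrightarrow> m < 7 \<Longrightarrow>
  -2 * ((if pa m = pa k \<and> pb m = pb k then 1 else 0) - (if pa m = 0 \<and> pb m = 3 then 1 else 0)) = (if k = m then -2 else (0::complex))"
  by (drule seven_cases, drule seven_cases) (elim disjE; simp add: pab_vals)

lemma qab_lt: "k < 6 \<Longrightarrow> qa k < 4 \<and> qb k < 4"
  by (simp add: qa_def qb_def less_Suc_eq numeral_eq_Suc, elim disjE; simp)


lemma sum6: "(\<Sum>j<6. f j) = f 0 + f 1 + f 2 + f 3 + f 4 + f (5::nat)"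
  by (simp add: lessThan_Suc numeral_eq_Suc ac_simps)

lemma final:
  fixes l1 l2 :: 'l and E :: "'l state \<Rightarrow> 'l state"
  assumes l: "l1 \<noteq> l2" and E: "lin E" "resp [l1 \<mapsto> Qbit, l2 \<mapsto> Qbit] [l1 \<mapsto> Qbit, l2 \<mapsto> Qbit] E"
    and hk: "\<forall>k<7. \<exists>y. \<forall>r<4. \<forall>s<4. E (subs (usem Vd [l1,l2] [l1,l2] y) (usem (1\<^sub>m 4) [l1,l2] [l1,l2] y)) (\<lambda>_. False) (ind l1 l2 r) (ind l1 l2 s)
        = -2 * ((if r = pa k \<and> s = pb k then 1 else 0) - (if r = 0 \<and> s = 3 then 1 else 0))"
  shows False
proof -
  from hk have "\<forall>k. \<exists>y. k < 7 \<longrightarrow> (\<forall>r<4. \<forall>s<4. E (subs (usem Vd [l1,l2] [l1,l2] y) (usem (1\<^sub>m 4) [l1,l2] [l1,l2] y)) (\<lambda>_. False) (ind l1 l2 r) (ind l1 l2 s)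
        = -2 * ((if r = pa k \<and> s = pb k then 1 else 0) - (if r = 0 \<and> s = 3 then 1 else 0)))" by blast
  then obtain Y where Y: "\<And>k r s. k < 7 \<Longrightarrow> r < 4 \<Longrightarrow> s < 4 \<Longrightarrow> E (subs (usem Vd [l1,l2] [l1,l2] (Y k)) (usem (1\<^sub>m 4) [l1,l2] [l1,l2] (Y k))) (\<lambda>_. False) (ind l1 l2 r) (ind l1 l2 s)
        = -2 * ((if r = pa k \<and> s = pb k then 1 else 0) - (if r = 0 \<and> s = 3 then 1 else 0))"
    by metis
  define Cc where "Cc k j = -2 * Y k (\<lambda>_. False) (ind l1 l2 (qa j)) (ind l1 l2 (qb j))" for k j
  define W where "W j m = E (mst l1 l2 (qa j) (qb j)) (\<lambda>_. False) (ind l1 l2 (pa m)) (ind l1 l2 (pb m))" for j m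
  have la: "E (addst a b) = addst (E a) (E b)" "E (smul c a) = smul c (E a)" for a b c
    using E(1) lin_add lin_smul by blast+
  show False
  proof (rule rank_contra[of Cc W])
    fix k m :: nat assume km: "k < 7" "m < 7"
    have pm: "pa m < 4" "pb m < 4" using pab_lt[OF km(2)] by auto
    have "(\<Sum>j<6. Cc k j * W j m) = E (S6 l1 l2 (Y k)) (\<lambda>_. False) (ind l1 l2 (pa m)) (ind l1 l2 (pb m))"
      unfolding sum6 S6_def t6_def la unfolding addst_def smul_def Cc_def W_def by (simp only: add.assoc)
    also have "\<dots> = E (subs (usem Vd [l1,l2] [l1,l2] (Y k)) (usem (1\<^sub>m 4) [l1,l2] [l1,l2] (Y k))) (\<lambda>_. False) (ind l1 l2 (pa m)) (ind l1 l2 (pb m))"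
      using E(2) dV[OF l, of "Y k"] canon_ind[of l1 l2 "pa m" "pb m"] unfolding resp_def eqon_def by metis
    also have "\<dots> = (if k = m then -2 else 0)" unfolding Y[OF km(1) pm] by (rule pab_prop[OF km])
    finally show "(\<Sum>j<6. Cc k j * W j m) = (if k = m then -2 else 0)" .
  qed
qed


definition st0 :: "'l \<Rightarrow> 'l \<Rightarrow> 'l \<Rightarrow> bool \<Rightarrow> 'l state" where
  "st0 l l1 l2 v = (\<lambda>c i j. if c = (\<lambda>_. False)(l := v) \<and> i = ind l1 l2 0 \<and> j = ind l1 l2 3 then 1 else 0)"

lemma st0_states:
  assumes "distinct [l, l1, l2]"
  shows "st0 l l1 l2 v \<in> states ([l1 \<mapsto> Qbit, l2 \<mapsto> Qbit](l \<mapsto> Bit))"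
proof -
  have "canon_idx ([l1 \<mapsto> Qbit, l2 \<mapsto> Qbit](l \<mapsto> Bit)) ((\<lambda>_. False)(l := v)) (ind l1 l2 0) (ind l1 l2 3)"
    using assms by (auto simp: canon_idx_def labels_of_def canon_def ind_def indb_def)
  then show ?thesis unfolding states_def st0_def by auto
qed

abbreviation hU :: "'l \<Rightarrow> 'l \<Rightarrow> complex mat \<Rightarrow> 'l state \<Rightarrow> 'l state" where
  "hU l1 l2 M \<equiv> usem M [l1, l2] [l1, l2]"

definition fXY :: "complex mat \<Rightarrow> complex mat \<Rightarrow> nat \<Rightarrow> nat \<Rightarrow> complex" where
  "fXY X Y r s = (\<Sum>p<4. X $$ (r,p) * Y $$ (p,0)) * cnj (\<Sum>q<4. X $$ (s,q) * Y $$ (q,3))"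

lemma csemD:
  fixes l l1 l2 :: 'l
  assumes d: "distinct [l, l1, l2]" and rs: "r < 4" "s < 4"
  shows "csem (hU l1 l2 A) (hU l1 l2 B) (If l (Seq Hole1 Hole2) (Seq Hole2 Hole1)) (st0 l l1 l2 v) (\<lambda>_. False) (ind l1 l2 r) (ind l1 l2 s)
    = (if v then fXY B A r s else fXY A B r s)"
proof -
  have l: "l1 \<noteq> l2" using d by auto
  have z: "(\<lambda>c' i' j'. st0 l l1 l2 v (c'(l := \<not> v)) i' j') = zst"
    by (auto simp: st0_def zst_def fun_eq_iff)
  have nz: "(\<lambda>c' i' j'. st0 l l1 l2 v (c'(l := v)) i' j') (\<lambda>_. False) (ind l1 l2 p) (ind l1 l2 q) = (if p = 0 \<and> q = 3 then 1 else 0)"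
    if "p < 4" "q < 4" for p q
    using that l by (simp add: st0_def ind_inj)
  have hz: "hU l1 l2 X (hU l1 l2 Y zst) = zst" for X Y by (simp add: lin_zero[OF lin_usem])
  show ?thesis
  proof (cases v)
    case True
    then show ?thesis using z hz compose[OF l rs, of "\<lambda>c' i' j'. st0 l l1 l2 v (c'(l := v)) i' j'" "\<lambda>_. False" B A] nz
      by (simp add: fXY_def zst_def)
  next
    case False
    then show ?thesis using z hz compose[OF l rs, of "\<lambda>c' i' j'. st0 l l1 l2 v (c'(l := v)) i' j'" "\<lambda>_. False" A B] nz
      by (simp add: fXY_def zst_def)
  qed
qed

lemma fXY_vals: "fXY X Vd r s = - (X $$ (r,0) * cnj (X $$ (s,3)))" "fXY X (1\<^sub>m 4) r s = X $$ (r,0) * cnj (X $$ (s,3))"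
  unfolding fXY_def colsum_Vd colsum_I by simp_all

lemma DeltaD:
  fixes l l1 l2 :: 'l
  assumes d: "distinct [l, l1, l2]" and rs: "r < 4" "s < 4"
  shows "Delta (hU l1 l2 (if v then Vd else Pm pp)) (hU l1 l2 (1\<^sub>m 4)) (hU l1 l2 (if v then Pm pp else Vd)) (hU l1 l2 (1\<^sub>m 4))
      (If l (Seq Hole1 Hole2) (Seq Hole2 Hole1)) (st0 l l1 l2 v) (\<lambda>_. False) (ind l1 l2 r) (ind l1 l2 s)
    = -2 * ((if r = pp ! 0 \<and> s = pp ! 3 then 1 else 0) - (if r = 0 \<and> s = 3 then 1 else 0))"
  unfolding Delta_def addst_def subs_def csemD[OF d rs]
  using rs by (cases v) (auto simp: fXY_vals Pm_col)


definition permk :: "nat \<Rightarrow> nat list" where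
  "permk k = [[0,3,2,1],[0,1,3,2],[1,2,3,0],[1,0,3,2],[1,0,2,3],[2,1,3,0],[2,0,3,1]] ! k"

lemma permk_vals: "permk 0 = [0,3,2,1]" "permk (Suc 0) = [0,1,3,2]" "permk 1 = [0,1,3,2]" "permk 2 = [1,2,3,0]"
  "permk 3 = [1,0,3,2]" "permk 4 = [1,0,2,3]" "permk 5 = [2,1,3,0]" "permk 6 = [2,0,3,1]"
  by (simp_all add: permk_def nth_Cons')

lemma pk_gen: "permk k = pp \<Longrightarrow> unitary4 (Pm pp) \<Longrightarrow> pp ! 0 = pa k \<Longrightarrow> pp ! 3 = pb k \<Longrightarrow>
  unitary4 (Pm (permk k)) \<and> permk k ! 0 = pa k \<and> permk k ! 3 = pb k" by simp

lemma permk_props: "k < 7 \<Longrightarrow> unitary4 (Pm (permk k)) \<and> permk k ! 0 = pa k \<and> permk k ! 3 = pb k"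
proof -
  assume "k < 7"
  then have "k = 0 \<or> k = 1 \<or> k = 2 \<or> k = 3 \<or> k = 4 \<or> k = 5 \<or> k = 6" by (rule seven_cases)
  then show ?thesis
  proof (elim disjE)
    assume "k = 0" then show ?thesis using pk_gen[OF permk_vals(1) unitary_Pm1] by (simp add: pab_vals)
  next
    assume "k = 1" then show ?thesis using pk_gen[OF permk_vals(3) unitary_Pm_0132] by (simp add: pab_vals)
  next
    assume "k = 2" then show ?thesis using pk_gen[OF permk_vals(4) unitary_Pm_1230] by (simp add: pab_vals)
  next
    assume "k = 3" then show ?thesis using pk_gen[OF permk_vals(5) unitary_Pm_1032] by (simp add: pab_vals)
  next
    assume "k = 4" then show ?thesis using pk_gen[OF permk_vals(6) unitary_Pm_1023] by (simp add: pab_vals)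
  next
    assume "k = 5" then show ?thesis using pk_gen[OF permk_vals(7) unitary_Pm_2130] by (simp add: pab_vals)
  next
    assume "k = 6" then show ?thesis using pk_gen[OF permk_vals(8) unitary_Pm_2031] by (simp add: pab_vals)
  qed
qed

lemma DeltaCD:
  assumes eqv: "\<forall>U V. unitary4 U \<longrightarrow> unitary4 V \<longrightarrow> (\<forall>st\<in>states Ga. \<forall>c i j. canon_idx De c i j \<longrightarrow>
      fill_sem l1 l2 U V C st c i j = fill_sem l1 l2 U V D st c i j)"
    and u: "unitary4 U" "unitary4 U'" "unitary4 V" "unitary4 V'" and st: "st \<in> states Ga" and cj: "canon_idx De c i j"
  shows "Delta (hU l1 l2 U) (hU l1 l2 U') (hU l1 l2 V) (hU l1 l2 V') C st c i j = Delta (hU l1 l2 U) (hU l1 l2 U') (hU l1 l2 V) (hU l1 l2 V') D st c i j"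
proof -
  have e: "csem (hU l1 l2 X) (hU l1 l2 Y) C st c i j = csem (hU l1 l2 X) (hU l1 l2 Y) D st c i j"
    if "unitary4 X" "unitary4 Y" for X Y
    using eqv that st cj unfolding fill_sem_def by blast
  show ?thesis unfolding Delta_def addst_def subs_def using e u by simp
qed

theorem mainTheorem2:
  fixes l l1 l2 :: 'l and C :: "'l circ"
  assumes "infinite (UNIV :: 'l set)"
    and "distinct [l, l1, l2]"
    and "typing [l1 \<mapsto> Qbit, l2 \<mapsto> Qbit] ([l1 \<mapsto> Qbit, l2 \<mapsto> Qbit](l \<mapsto> Bit)) C [l1 \<mapsto> Qbit, l2 \<mapsto> Qbit]"
    and "approx l1 l2 ([l1 \<mapsto> Qbit, l2 \<mapsto> Qbit](l \<mapsto> Bit)) [l1 \<mapsto> Qbit, l2 \<mapsto> Qbit]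
           C (If l (Seq Hole1 Hole2) (Seq Hole2 Hole1))"
  shows "count_hole1 C > 1 \<or> count_hole2 C > 1"
proof (rule ccontr)
  assume "\<not> (count_hole1 C > 1 \<or> count_hole2 C > 1)"
  then have c: "count_hole1 C \<le> 1" "count_hole2 C \<le> 1" by auto
  have l: "l1 \<noteq> l2" using assms(2) by auto
  obtain b E where ME: "MM b [l1 \<mapsto> Qbit, l2 \<mapsto> Qbit] [l1 \<mapsto> Qbit, l2 \<mapsto> Qbit] C E"
    using claimM[OF assms(3) c] by blast
  have eqv: "\<forall>U V. unitary4 U \<longrightarrow> unitary4 V \<longrightarrow> (\<forall>st\<in>states ([l1 \<mapsto> Qbit, l2 \<mapsto> Qbit](l \<mapsto> Bit)). \<forall>c i j. canon_idx [l1 \<mapsto> Qbit, l2 \<mapsto> Qbit] c i j \<longrightarrow>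
      fill_sem l1 l2 U V C st c i j = fill_sem l1 l2 U V (If l (Seq Hole1 Hole2) (Seq Hole2 Hole1)) st c i j)"
    using assms(4) unfolding approx_def by blast
  have mm: "\<forall>h1 h1' h2 h2' st. good [l1 \<mapsto> Qbit, l2 \<mapsto> Qbit] h1 \<longrightarrow> good [l1 \<mapsto> Qbit, l2 \<mapsto> Qbit] h1' \<longrightarrow> good [l1 \<mapsto> Qbit, l2 \<mapsto> Qbit] h2 \<longrightarrow> good [l1 \<mapsto> Qbit, l2 \<mapsto> Qbit] h2' \<longrightarrow>
     (\<exists>y. eqon [l1 \<mapsto> Qbit, l2 \<mapsto> Qbit] (Delta h1 h1' h2 h2' C st) (E (if b then subs (h1 y) (h1' y) else subs (h2 y) (h2' y))))"
    using ME unfolding MM_def by blast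
  have E: "lin E" "resp [l1 \<mapsto> Qbit, l2 \<mapsto> Qbit] [l1 \<mapsto> Qbit, l2 \<mapsto> Qbit] E" using ME unfolding MM_def by auto
  have hk: "\<forall>k<7. \<exists>y. \<forall>r<4. \<forall>s<4. E (subs (usem Vd [l1,l2] [l1,l2] y) (usem (1\<^sub>m 4) [l1,l2] [l1,l2] y)) (\<lambda>_. False) (ind l1 l2 r) (ind l1 l2 s)
        = -2 * ((if r = pa k \<and> s = pb k then 1 else 0) - (if r = 0 \<and> s = 3 then 1 else 0))"
  proof (intro allI impI)
    fix k :: nat assume k: "k < 7"
    note pk = permk_props[OF k]
    define A where "A = (if b then Vd else Pm (permk k))"
    define B where "B = (if b then Pm (permk k) else Vd)"
    have uA: "unitary4 A" and uB: "unitary4 B" using pk unitary_Vd by (auto simp: A_def B_def)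
    obtain y where y: "eqon [l1 \<mapsto> Qbit, l2 \<mapsto> Qbit]
        (Delta (hU l1 l2 A) (hU l1 l2 (1\<^sub>m 4)) (hU l1 l2 B) (hU l1 l2 (1\<^sub>m 4)) C (st0 l l1 l2 b))
        (E (if b then subs (hU l1 l2 A y) (hU l1 l2 (1\<^sub>m 4) y) else subs (hU l1 l2 B y) (hU l1 l2 (1\<^sub>m 4) y)))"
      using mm[rule_format, of "hU l1 l2 A" "hU l1 l2 (1\<^sub>m 4)" "hU l1 l2 B" "hU l1 l2 (1\<^sub>m 4)" "st0 l l1 l2 b", OF good_h good_h good_h good_h]
      by blast
    have yy: "(if b then subs (hU l1 l2 A y) (hU l1 l2 (1\<^sub>m 4) y) else subs (hU l1 l2 B y) (hU l1 l2 (1\<^sub>m 4) y))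
        = subs (hU l1 l2 Vd y) (hU l1 l2 (1\<^sub>m 4) y)" by (simp add: A_def B_def)
    show "\<exists>y. \<forall>r<4. \<forall>s<4. E (subs (usem Vd [l1,l2] [l1,l2] y) (usem (1\<^sub>m 4) [l1,l2] [l1,l2] y)) (\<lambda>_. False) (ind l1 l2 r) (ind l1 l2 s)
        = -2 * ((if r = pa k \<and> s = pb k then 1 else 0) - (if r = 0 \<and> s = 3 then 1 else 0))"
    proof (intro exI allI impI)
      fix r s :: nat assume rs: "r < 4" "s < 4"
      have "E (subs (usem Vd [l1,l2] [l1,l2] y) (usem (1\<^sub>m 4) [l1,l2] [l1,l2] y)) (\<lambda>_. False) (ind l1 l2 r) (ind l1 l2 s)
          = Delta (hU l1 l2 A) (hU l1 l2 (1\<^sub>m 4)) (hU l1 l2 B) (hU l1 l2 (1\<^sub>m 4)) C (st0 l l1 l2 b) (\<lambda>_. False) (ind l1 l2 r) (ind l1 l2 s)"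
        using eqonD[OF y canon_ind] unfolding yy by simp
      also have "\<dots> = Delta (hU l1 l2 A) (hU l1 l2 (1\<^sub>m 4)) (hU l1 l2 B) (hU l1 l2 (1\<^sub>m 4)) (If l (Seq Hole1 Hole2) (Seq Hole2 Hole1)) (st0 l l1 l2 b) (\<lambda>_. False) (ind l1 l2 r) (ind l1 l2 s)"
        by (rule DeltaCD[OF eqv uA unitary_I uB unitary_I st0_states[OF assms(2)] canon_ind])
      also have "\<dots> = -2 * ((if r = pa k \<and> s = pb k then 1 else 0) - (if r = 0 \<and> s = 3 then 1 else 0))"
        using DeltaD[OF assms(2) rs, of b "permk k"] pk unfolding A_def B_def by simp
      finally show "E (subs (usem Vd [l1,l2] [l1,l2] y) (usem (1\<^sub>m 4) [l1,l2] [l1,l2] y)) (\<lambda>_. False) (ind l1 l2 r) (ind l1 l2 s)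
        = -2 * ((if r = pa k \<and> s = pb k then 1 else 0) - (if r = 0 \<and> s = 3 then 1 else 0))" .
    qed
  qed
  show False by (rule final[OF l E hk])
qed


end
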